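(* Let $g:S\to T$ and $f:T\to U$ be non-degenerate nested tuple morphisms, with $g$ complementable (its underlying pointed map is injective). Then $\mathrm{coal}(L_{f\oslash g})=\mathrm{coal}(L_f\oslash L_g)$.
   Context: Nested tuples (of positive integers): a positive integer or a finite tuple of nested tuples; flattening $X^\flat$ (leaves left to right), $\mathrm{len}$, $\mathrm{entry}_i$, $\mathrm{size}$ = product of entries; depth, rank, modes as usual. $\langle n\rangle_*=\{*,1,\dots,n\}$. Layouts: $L=S:D$ with congruent $S$ (positive) and $D$ (nonnegative); $L^\flat=S^\flat:D^\flat$; concatenation $(L_1,\dots,L_k)=(S_1,\dots,S_k):(D_1,\dots,D_k)$. Layout function of flat $(s_i):(d_i)$: $\Phi(x)=\sum x_id_i$, $x_i=\lfloor x/(s_1\cdots s_{i-1})\rfloor\bmod s_i$ on $[0,\prod s_i)$; $\Phi_L=\Phi_{L^\flat}$. Flat operations: $\mathrm{squeeze}$ (remove modes with $s_i=1$), $\mathrm{sort}$ (stable reorder nondecreasing for $s:d\preceq s':d'$ iff $d<d'$ or ($d=d'$, $s\le s'$)), $\mathrm{coal}^\flat$ (squeeze, then repeatedly merge adjacent $s_i,s_{i+1}:d_i,s_id_i$ into $s_is_{i+1}:d_i$). A flat layout is coalesced if no $s_i=1$ and $s_id_i\ne d_{i+1}$. $\mathrm{coal}(L)$: with $\mathrm{coal}^\flat(L^\flat)=(s_1,\dots,s_k):(d_1,\dots,d_k)$, it is this flat layout if $k>1$, $s_1:d_1$ if $k=1$, $1:0$ if $k=0$. A layout is coalesced if it is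 $1:0$, or depth $0$ with shape $>1$, or depth $1$, rank $>1$, and coalesced as a flat layout. $N$-complement: for $A$ with $\mathrm{sort}(\mathrm{squeeze}(A^\flat))=(s_1,\dots,s_m):(d_1,\dots,d_m)$, $s_id_i\mid d_{i+1}$ and $s_md_m\mid N$, set $\mathrm{comp}(A,N)=\mathrm{coal}(\mathrm{coal}^\flat(C))$, $C=\bigl(d_1,\tfrac{d_2}{s_1d_1},\dots,\tfrac{N}{s_md_m}\bigr):(1,s_1d_1,\dots,s_md_m)$. Refinement: $X'$ refines $X$ if $X$ is an integer equal to $\mathrm{size}(X')$, or both are tuples of the same rank with modes refining modes; then $X'$ arises by replacing the $i$-th leaf of $X$ by a nested tuple $X'_i$, and for a layout $L=X':D$ its $i$-th relative mode is $X'_i:D_i$ ($D_i$ the corresponding part); $L$ is coalesced over $X$ if all relative modes are coalesced. Composition $B\circ A$: the unique layout $C$ with $\mathrm{shape}(C)$ refining $\mathrm{shape}(A)$, $C$ coalesced over $\mathrm{shape}(A)$, $\mathrm{Image}(\Phi_A)\subseteq[0,\mathrm{size}(B))$ and $\Phi_C=\Phi_B\circ\Phi_A$. Logical division: $A\oslash B=A\circ(B,\mathrm{comp}(B,\mathrm{size}(A)))$. Nested tuple morphisms $f:S\to T$ over pointed maps $\alpha$ (each $j\ne*$ at most one preimage, $\mathrm{entry}_i(S)=\mathrm{entry}_{\alpha(i)}(T)$ if $\alpha(i)\ne*$); composition over composite maps; $L_f$ has shape $S$ and stride with $i$-th flattened entry $0$ if $\alpha(i)=*$, else $\prod_{j<\alpha(i)}t_j$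 where $T^\flat=(t_1,\dots,t_n)$; non-degenerate: $\mathrm{entry}_i(S)=1\Rightarrow\alpha(i)=*$. For injective $g:S\to T$ over $\alpha$, with $j_1<\dots<j_k$ the indices not in $\mathrm{Image}(\alpha)$, $g^c:(t_{j_1},\dots,t_{j_k})\to T$ lies over $r\mapsto j_r$. Morphisms $g_1:S_1\to T$, $g_2:S_2\to T$ over $\alpha_1,\alpha_2$ with $\mathrm{Image}(\alpha_1)\cap\mathrm{Image}(\alpha_2)=\{*\}$ have concatenation $(g_1,g_2):(S_1,S_2)\to T$ over $i\mapsto\alpha_1(i)$ for $i\le\mathrm{len}(S_1)$, $\alpha_2(i-\mathrm{len}(S_1))$ otherwise. Logical division: $f\oslash g=f\circ(g,g^c)$. *)

theory Defs
  imports Main "HOL-Library.Product_Lexorder"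
begin

datatype ntuple = Leaf nat | Node "ntuple list"

fun flat :: "ntuple \<Rightarrow> nat list" where
  "flat (Leaf n) = [n]"
| "flat (Node xs) = concat (map flat xs)"

definition len :: "ntuple \<Rightarrow> nat" where
  "len X = length (flat X)"

definition tsize :: "ntuple \<Rightarrow> nat" where
  "tsize X = prod_list (flat X)"

fun depth :: "ntuple \<Rightarrow> nat" where
  "depth (Leaf n) = 0"
| "depth (Node xs) = Suc (fold max (map depth xs) 0)"

fun rank :: "ntuple \<Rightarrow> nat" where
  "rank (Leaf n) = 1"
| "rank (Node xs) = length xs"

definition positive_nt :: "ntuple \<Rightarrow> bool" where
  "positive_nt X \<longleftrightarrow> (\<forall>x \<in> set (flat X). 0 < x)"

fun congruent :: "ntuple \<Rightarrow> ntuple \<Rightarrow> bool" where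
  "congruent (Leaf _) (Leaf _) = True"
| "congruent (Node xs) (Node ys) = list_all2 congruent xs ys"
| "congruent _ _ = False"

fun refines :: "ntuple \<Rightarrow> ntuple \<Rightarrow> bool" where
  "refines X' (Leaf n) = (tsize X' = n)"
| "refines (Node xs') (Node xs) = list_all2 refines xs' xs"
| "refines (Leaf _) (Node _) = False"

fun fillT :: "ntuple \<Rightarrow> nat list \<Rightarrow> ntuple \<times> nat list"
and fillL :: "ntuple list \<Rightarrow> nat list \<Rightarrow> ntuple list \<times> nat list" where
  "fillT (Leaf _) ns = (Leaf (hd ns), tl ns)"
| "fillT (Node xs) ns = (let (ys, r) = fillL xs ns in (Node ys, r))"
| "fillL [] ns = ([], ns)"
| "fillL (x # xs) ns = (let (y, r) = fillT x ns; (ys, r') = fillL xs r in (y # ys, r'))"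

definition fill :: "ntuple \<Rightarrow> nat list \<Rightarrow> ntuple" where
  "fill X ns = fst (fillT X ns)"

text \<open>A layout is a pair (shape, stride) of nested tuples.\<close>
type_synonym layout = "ntuple \<times> ntuple"

definition valid_layout :: "layout \<Rightarrow> bool" where
  "valid_layout L \<longleftrightarrow> congruent (fst L) (snd L) \<and> positive_nt (fst L)"

definition lflat :: "layout \<Rightarrow> (nat \<times> nat) list" where
  "lflat L = zip (flat (fst L)) (flat (snd L))"

definition lsize :: "layout \<Rightarrow> nat" where
  "lsize L = tsize (fst L)"

definition lconcat :: "layout \<Rightarrow> layout \<Rightarrow> layout" where
  "lconcat L1 L2 = (Node [fst L1, fst L2], Node [snd L1, snd L2])"

definition phi_flat :: "(nat \<times> nat) list \<Rightarrow> nat \<Rightarrow> nat" where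
  "phi_flat sd x = (\<Sum>i<length sd.
      ((x div prod_list (take i (map fst sd))) mod fst (sd ! i)) * snd (sd ! i))"

definition phi :: "layout \<Rightarrow> nat \<Rightarrow> nat" where
  "phi L = phi_flat (lflat L)"

definition squeeze :: "(nat \<times> nat) list \<Rightarrow> (nat \<times> nat) list" where
  "squeeze sd = filter (\<lambda>(s, d). s \<noteq> 1) sd"

definition lsort :: "(nat \<times> nat) list \<Rightarrow> (nat \<times> nat) list" where
  "lsort sd = sort_key (\<lambda>(s, d). (d, s)) sd"

fun merge_modes :: "(nat \<times> nat) list \<Rightarrow> (nat \<times> nat) list" where
  "merge_modes ((s1, d1) # (s2, d2) # rest) =
     (if d2 = s1 * d1 then merge_modes ((s1 * s2, d1) # rest)
      else (s1, d1) # merge_modes ((s2, d2) # rest))"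
| "merge_modes sd = sd"

definition coal_flat :: "(nat \<times> nat) list \<Rightarrow> (nat \<times> nat) list" where
  "coal_flat sd = merge_modes (squeeze sd)"

definition flat_coalesced :: "(nat \<times> nat) list \<Rightarrow> bool" where
  "flat_coalesced sd \<longleftrightarrow> (\<forall>i < length sd. fst (sd ! i) \<noteq> 1)
     \<and> (\<forall>i. Suc i < length sd \<longrightarrow> fst (sd ! i) * snd (sd ! i) \<noteq> snd (sd ! Suc i))"

definition layout_of_flat :: "(nat \<times> nat) list \<Rightarrow> layout" where
  "layout_of_flat sd =
     (if length sd > 1 then (Node (map (Leaf \<circ> fst) sd), Node (map (Leaf \<circ> snd) sd))
      else if length sd = 1 then (Leaf (fst (hd sd)), Leaf (snd (hd sd)))
      else (Leaf 1, Leaf 0))"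

definition coal :: "layout \<Rightarrow> layout" where
  "coal L = layout_of_flat (coal_flat (lflat L))"

definition coalesced :: "layout \<Rightarrow> bool" where
  "coalesced L \<longleftrightarrow> L = (Leaf 1, Leaf 0)
     \<or> (depth (fst L) = 0 \<and> tsize (fst L) > 1)
     \<or> (depth (fst L) = 1 \<and> rank (fst L) > 1 \<and> flat_coalesced (lflat L))"

lemma coal_over_term_aux:
  "i < length (xs :: ntuple list) \<Longrightarrow> size (xs ! i) < Suc (size_list size xs)"
  using nth_mem[of i xs] size_list_estimation'[of "xs ! i" xs "size (xs ! i)" size] by simp

function coalesced_over :: "ntuple \<Rightarrow> ntuple \<Rightarrow> ntuple \<Rightarrow> bool" where
  "coalesced_over X' D (Leaf n) = coalesced (X', D)"
| "coalesced_over (Node xs') (Node ds) (Node xs) =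
     (length xs' = length xs \<and> length ds = length xs \<and>
      (\<forall>i < length xs. coalesced_over (xs' ! i) (ds ! i) (xs ! i)))"
| "coalesced_over (Leaf a) D (Node xs) = False"
| "coalesced_over (Node xs') (Leaf d) (Node xs) = False"
  by pat_completeness auto
termination
  by (relation "measure (\<lambda>(_, _, x). size x)")
     (auto simp: coal_over_term_aux)


definition lcomplement :: "layout \<Rightarrow> nat \<Rightarrow> layout" where
  "lcomplement A N =
     (let sd = lsort (squeeze (lflat A));
          ps = map (\<lambda>(s, d). s * d) sd;
          strides = 1 # ps;
          shapes = map2 (div) (map snd sd @ [N]) strides
      in coal (layout_of_flat (coal_flat (zip shapes strides))))"

definition lcompose :: "layout \<Rightarrow> layout \<Rightarrow> layout" where
  "lcompose B A = (THE C. valid_layout C \<and> refines (fst C) (fst A)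
      \<and> coalesced_over (fst C) (snd C) (fst A)
      \<and> (\<forall>x < lsize A. phi A x < lsize B)
      \<and> (\<forall>x < lsize A. phi C x = phi B (phi A x)))"

definition ldivide :: "layout \<Rightarrow> layout \<Rightarrow> layout" where
  "ldivide A B = lcompose A (lconcat B (lcomplement B (lsize A)))"

text \<open>A morphism (S, T, \<alpha>): flattened indices are 0-based, None plays the role of *.\<close>
type_synonym morph = "ntuple \<times> ntuple \<times> (nat \<Rightarrow> nat option)"

definition is_morph :: "morph \<Rightarrow> bool" where
  "is_morph f = (case f of (S, T, \<alpha>) \<Rightarrow>
      positive_nt S \<and> positive_nt T
    \<and> (\<forall>i. len S \<le> i \<longrightarrow> \<alpha> i = None)
    \<and> (\<forall>i j. i < len S \<and> \<alpha> i = Some j \<longrightarrow> j < len T \<and> flat S ! i = flat T ! j)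
    \<and> (\<forall>i i' j. i < len S \<and> i' < len S \<and> \<alpha> i = Some j \<and> \<alpha> i' = Some j \<longrightarrow> i = i'))"

definition mdom :: "morph \<Rightarrow> ntuple" where "mdom f = fst f"
definition mcod :: "morph \<Rightarrow> ntuple" where "mcod f = fst (snd f)"
definition mmap :: "morph \<Rightarrow> nat \<Rightarrow> nat option" where "mmap f = snd (snd f)"

definition non_degenerate :: "morph \<Rightarrow> bool" where
  "non_degenerate f \<longleftrightarrow> (\<forall>i < len (mdom f). flat (mdom f) ! i = 1 \<longrightarrow> mmap f i = None)"

text \<open>Complementable: the underlying pointed map is injective (no non-* index goes to *).\<close>
definition complementable :: "morph \<Rightarrow> bool" where
  "complementable g \<longleftrightarrow> (\<forall>i < len (mdom g). mmap g i \<noteq> None)"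

definition mcompose :: "morph \<Rightarrow> morph \<Rightarrow> morph" where
  "mcompose f g = (mdom g, mcod f,
     \<lambda>i. case mmap g i of None \<Rightarrow> None | Some j \<Rightarrow> mmap f j)"

definition mlayout :: "morph \<Rightarrow> layout" where
  "mlayout f = (mdom f, fill (mdom f)
     (map (\<lambda>i. case mmap f i of None \<Rightarrow> 0
                | Some j \<Rightarrow> prod_list (take j (flat (mcod f)))) [0..<len (mdom f)]))"

definition missing_idx :: "morph \<Rightarrow> nat list" where
  "missing_idx g = filter (\<lambda>j. j \<notin> the ` (mmap g ` {..<len (mdom g)} - {None}))
                          [0..<len (mcod g)]"

definition mcomplement :: "morph \<Rightarrow> morph" where
  "mcomplement g = (let js = missing_idx g in
     (Node (map (\<lambda>j. Leaf (flat (mcod g) ! j)) js), mcod g,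
      \<lambda>r. if r < length js then Some (js ! r) else None))"

definition mconcat :: "morph \<Rightarrow> morph \<Rightarrow> morph" where
  "mconcat g1 g2 = (Node [mdom g1, mdom g2], mcod g1,
     \<lambda>i. if i < len (mdom g1) then mmap g1 i else mmap g2 (i - len (mdom g1)))"

definition mdivide :: "morph \<Rightarrow> morph \<Rightarrow> morph" where
  "mdivide f g = mcompose f (mconcat g (mcomplement g))"

end

theory Submission
  imports Defs "HOL-Library.Multiset"
begin

abbreviation pm :: "(nat \<times> nat) list \<Rightarrow> nat" where
  "pm xs \<equiv> prod_list (map fst xs)"

lemma phi_flat_Nil[simp]: "phi_flat [] x = 0"
  by (simp add: phi_flat_def)

lemma phi_flat_Cons: "phi_flat ((s,d)#rest) x = (x mod s) * d + phi_flat rest (x div s)"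
  unfolding phi_flat_def length_Cons sum.lessThan_Suc_shift
  by (simp add: div_mult2_eq)

lemma phi_flat_Cons': "phi_flat (p#rest) x = (x mod fst p) * snd p + phi_flat rest (x div fst p)"
  by (cases p) (simp add: phi_flat_Cons)

lemma phi_flat_append:
  "phi_flat (xs @ ys) x = phi_flat xs x + phi_flat ys (x div pm xs)"
  by (induction xs arbitrary: x) (auto simp: phi_flat_Cons' div_mult2_eq)

lemma phi_flat_zero[simp]: "phi_flat xs 0 = 0"
  by (induction xs) (auto simp: phi_flat_Cons')

lemma phi_flat_ones: "\<forall>p\<in>set xs. fst p = 1 \<Longrightarrow> phi_flat xs x = 0"
  by (induction xs arbitrary: x) (auto simp: phi_flat_Cons')

lemma pm_pos: "\<forall>p\<in>set xs. 0 < fst p \<Longrightarrow> 0 < pm xs"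
  by (induction xs) auto

lemma phi_flat_mod:
  "\<forall>p\<in>set xs. 0 < fst p \<Longrightarrow> phi_flat xs (x mod pm xs) = phi_flat xs x"
proof (induction xs arbitrary: x)
  case Nil then show ?case by simp
next
  case (Cons p xs)
  obtain s d where p: "p = (s,d)" by force
  have s: "0 < s" using Cons.prems p by auto
  have "x mod pm (p#xs) = s * (x div s mod pm xs) + x mod s"
    using p by (simp add: mod_mult2_eq)
  moreover have "(s * (x div s mod pm xs) + x mod s) mod s = x mod s" by simp
  moreover have "(s * (x div s mod pm xs) + x mod s) div s = x div s mod pm xs"
    using s by simp
  ultimately show ?case using Cons p by (simp add: phi_flat_Cons)
qed

lemma phi_flat_lt_mod:
  "\<forall>p\<in>set xs. 0 < fst p \<Longrightarrow> phi_flat xs x = phi_flat xs (x mod pm xs)"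
  using phi_flat_mod by simp

lemma squeeze_simps[simp]:
  "squeeze [] = []"
  "squeeze (xs @ ys) = squeeze xs @ squeeze ys"
  "squeeze (p # xs) = (if fst p = 1 then squeeze xs else p # squeeze xs)"
  by (auto simp: squeeze_def split: prod.splits)

lemma squeeze_concat: "squeeze (concat xss) = concat (map squeeze xss)"
  by (induction xss) auto

lemma phi_flat_squeeze: "phi_flat (squeeze xs) x = phi_flat xs x"
  by (induction xs arbitrary: x) (auto simp: phi_flat_Cons')

lemma pm_squeeze: "pm (squeeze xs) = pm xs"
  by (induction xs) auto

lemma squeeze_set: "p \<in> set (squeeze xs) \<Longrightarrow> p \<in> set xs \<and> fst p \<noteq> 1"
  by (auto simp: squeeze_def)

lemma squeeze_id: "\<forall>p\<in>set xs. fst p \<noteq> 1 \<Longrightarrow> squeeze xs = xs"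
  by (induction xs) auto

definition mstep :: "nat \<times> nat \<Rightarrow> (nat \<times> nat) list \<Rightarrow> (nat \<times> nat) list" where
  "mstep x M = (case M of [] \<Rightarrow> [x] | h # t \<Rightarrow>
     (if snd h = fst x * snd x then (fst x * fst h, snd x) # t else x # M))"

lemma mstep_Nil[simp]: "mstep x [] = [x]" by (simp add: mstep_def)

lemma mstep_hd: "\<exists>h t. mstep y W = h # t \<and> snd h = snd y"
  by (cases W; cases y) (auto simp: mstep_def)

lemma mstep_assoc:
  assumes "snd y = fst x * snd x"
  shows "mstep x (mstep y W) = mstep (fst x * fst y, snd x) W"
  using assms by (cases W) (auto simp: mstep_def algebra_simps)

lemma merge_modes_Cons: "merge_modes (x # ys) = mstep x (merge_modes ys)"
proof (induction ys arbitrary: x)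
  case Nil then show ?case by (cases x) simp
next
  case (Cons y ys)
  obtain sx dx where x: "x = (sx, dx)" by force
  obtain sy dy where y: "y = (sy, dy)" by force
  show ?case
  proof (cases "dy = sx * dx")
    case True
    then show ?thesis using Cons[of "(sx*sy, dx)"] Cons[of y] x y
      by (simp add: mstep_assoc)
  next
    case False
    obtain h t where ht: "mstep y (merge_modes ys) = h # t" "snd h = snd y"
      using mstep_hd by blast
    show ?thesis using False Cons[of y] x y ht by (simp add: mstep_def)
  qed
qed

lemma merge_modes_foldr: "merge_modes xs = foldr mstep xs []"
  by (induction xs) (auto simp: merge_modes_Cons)

lemma mstep_foldr: "mstep y (foldr mstep Z X) = foldr mstep (mstep y Z) X"
proof (cases Z)
  case Nil then show ?thesis by simp
next
  case (Cons h t)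
  show ?thesis
  proof (cases "snd h = fst y * snd y")
    case True
    have "mstep y Z = (fst y * fst h, snd y) # t" by (simp add: mstep_def Cons True)
    then show ?thesis by (simp add: Cons mstep_assoc[OF True])
  next
    case False
    then show ?thesis using Cons by (simp add: mstep_def)
  qed
qed

lemma foldr_mstep_norm: "foldr mstep a X = foldr mstep (foldr mstep a []) X"
  by (induction a) (auto simp: mstep_foldr)

lemma merge_modes_idem: "merge_modes (merge_modes xs) = merge_modes xs"
  unfolding merge_modes_foldr by (metis foldr_mstep_norm)

lemma merge_modes_append:
  "merge_modes (a @ b) = merge_modes (merge_modes a @ merge_modes b)"
  unfolding merge_modes_foldr foldr_append
  by (metis foldr_mstep_norm)

lemma phi_flat_mstep: "phi_flat (mstep x W) y = phi_flat (x # W) y"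
proof (cases W)
  case Nil then show ?thesis by simp
next
  case (Cons h t)
  obtain s1 d1 where x: "x = (s1,d1)" by force
  obtain s2 d2 where h: "h = (s2,d2)" by force
  show ?thesis
  proof (cases "d2 = s1 * d1")
    case True
    have "y mod (s1 * s2) * d1 = (y mod s1) * d1 + (y div s1 mod s2) * (s1 * d1)"
      by (simp add: mod_mult2_eq algebra_simps)
    then show ?thesis using True Cons x h
      by (simp add: mstep_def phi_flat_Cons div_mult2_eq)
  next
    case False
    then show ?thesis using Cons x h by (simp add: mstep_def)
  qed
qed

lemma pm_mstep: "pm (mstep x W) = pm (x # W)"
  by (cases W) (auto simp: mstep_def)

lemma phi_flat_merge: "phi_flat (merge_modes xs) y = phi_flat xs y"
  unfolding merge_modes_foldr
  by (induction xs arbitrary: y) (auto simp: phi_flat_mstep phi_flat_Cons')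

lemma pm_merge: "pm (merge_modes xs) = pm xs"
  unfolding merge_modes_foldr
  by (induction xs) (auto simp: pm_mstep)

lemma mstep_set:
  assumes "P x" "\<forall>p\<in>set W. P p" "\<And>a b. P a \<Longrightarrow> P b \<Longrightarrow> P (fst a * fst b, snd a)"
  shows "\<forall>p\<in>set (mstep x W). P p"
  using assms by (cases W) (auto simp: mstep_def)

lemma merge_set:
  assumes "\<forall>p\<in>set xs. P p" "\<And>a b. P a \<Longrightarrow> P b \<Longrightarrow> P (fst a * fst b, snd a)"
  shows "\<forall>p\<in>set (merge_modes xs). P p"
  using assms(1) unfolding merge_modes_foldr
proof (induction xs)
  case (Cons x xs)
  show ?case by (simp, rule mstep_set) (use Cons assms(2) in auto)
qed simp

lemma merge_nonempty: "xs \<noteq> [] \<Longrightarrow> merge_modes xs \<noteq> []"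
  unfolding merge_modes_foldr by (cases xs) (auto simp: mstep_def split: list.splits)

fun nm :: "(nat \<times> nat) list \<Rightarrow> bool" where
  "nm (x # y # r) = (snd y \<noteq> fst x * snd x \<and> nm (y # r))"
| "nm _ = True"

lemma nm_mstep: "nm W \<Longrightarrow> nm (mstep x W)"
proof (cases W)
  case Nil then show ?thesis by simp
next
  case (Cons h t)
  assume W: "nm W"
  show ?thesis
  proof (cases t)
    case Nil then show ?thesis using Cons by (simp add: mstep_def)
  next
    case (Cons h2 t2)
    then show ?thesis using W \<open>W = h # t\<close> by (auto simp: mstep_def algebra_simps)
  qed
qed

lemma nm_merge: "nm (merge_modes xs)"
  unfolding merge_modes_foldr by (induction xs) (auto intro: nm_mstep)

lemma nm_merge_id: "nm xs \<Longrightarrow> merge_modes xs = xs"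
  by (induction xs rule: merge_modes.induct) auto

lemma nm_nth: "nm xs \<Longrightarrow> Suc i < length xs \<Longrightarrow> snd (xs ! Suc i) \<noteq> fst (xs ! i) * snd (xs ! i)"
  by (induction xs arbitrary: i rule: nm.induct) (auto simp: nth_Cons split: nat.splits)

lemma nth_nm: "(\<forall>i. Suc i < length xs \<longrightarrow> snd (xs ! Suc i) \<noteq> fst (xs ! i) * snd (xs ! i)) \<Longrightarrow> nm xs"
proof (induction xs rule: nm.induct)
  case (1 x y r)
  have "nm (y # r)"
    apply (rule 1(1))
    using 1(2) by (metis Suc_mono length_Cons nth_Cons_Suc)
  moreover have "snd y \<noteq> fst x * snd x" using 1(2)[rule_format, of 0] by simp
  ultimately show ?case by simp
qed auto

lemma coal_flat_no1: "\<forall>p\<in>set (coal_flat xs). fst p \<noteq> 1"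
  unfolding coal_flat_def
  by (rule merge_set) (auto dest: squeeze_set)

lemma coal_flat_pos: "\<forall>p\<in>set xs. 0 < fst p \<Longrightarrow> \<forall>p\<in>set (coal_flat xs). 0 < fst p"
  unfolding coal_flat_def
  by (rule merge_set) (auto dest: squeeze_set)

lemma coal_flat_idem: "coal_flat (coal_flat xs) = coal_flat xs"
  by (metis coal_flat_def coal_flat_no1 merge_modes_idem squeeze_id)

lemma coal_flat_append: "coal_flat (a @ b) = coal_flat (coal_flat a @ coal_flat b)"
proof -
  have "coal_flat (coal_flat a @ coal_flat b) = merge_modes (coal_flat a @ coal_flat b)"
    unfolding coal_flat_def[of "_ @ _"]
    using coal_flat_no1[of a] coal_flat_no1[of b]
    by (subst squeeze_id) auto
  then show ?thesis unfolding coal_flat_def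
    by (simp add: merge_modes_append[symmetric])
qed

lemma coal_flat_concat: "coal_flat (concat xss) = coal_flat (concat (map coal_flat xss))"
proof (induction xss)
  case Nil then show ?case by (simp add: coal_flat_def)
next
  case (Cons x xss)
  have "coal_flat (concat (x # xss)) = coal_flat (coal_flat x @ coal_flat (concat xss))"
    by (simp add: coal_flat_append[of x])
  also have "\<dots> = coal_flat (coal_flat (coal_flat x) @ coal_flat (concat (map coal_flat xss)))"
    using Cons by (simp add: coal_flat_idem)
  also have "\<dots> = coal_flat (concat (map coal_flat (x # xss)))"
    by (simp add: coal_flat_append[of "coal_flat x"])
  finally show ?case .
qed

lemma phi_flat_coal: "phi_flat (coal_flat xs) y = phi_flat xs y"
  by (simp add: coal_flat_def phi_flat_merge phi_flat_squeeze)

lemma pm_coal: "pm (coal_flat xs) = pm xs"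
  by (simp add: coal_flat_def pm_merge pm_squeeze)

lemma coal_flat_nonempty: "pm xs \<noteq> 1 \<Longrightarrow> coal_flat xs \<noteq> []"
  by (metis pm_coal prod_list.Nil list.simps(8))

lemma nm_coal: "nm (coal_flat xs)"
  by (simp add: coal_flat_def nm_merge)

lemma flat_coalesced_coal: "flat_coalesced (coal_flat xs)"
  unfolding flat_coalesced_def
proof (intro conjI allI impI)
  fix i assume "i < length (coal_flat xs)"
  then show "fst (coal_flat xs ! i) \<noteq> 1" using coal_flat_no1[of xs] by auto
next
  fix i assume "Suc i < length (coal_flat xs)"
  then show "fst (coal_flat xs ! i) * snd (coal_flat xs ! i) \<noteq> snd (coal_flat xs ! Suc i)"
    using nm_nth[OF nm_coal[of xs]] by metis
qed

lemma coal_flat_id: "\<forall>p\<in>set xs. fst p \<noteq> 1 \<Longrightarrow> nm xs \<Longrightarrow> coal_flat xs = xs"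
  by (simp add: coal_flat_def squeeze_id nm_merge_id)

section \<open>Flat uniqueness\<close>

lemma nm_tl: "nm (x # xs) \<Longrightarrow> nm xs"
  by (cases xs) auto

lemma pm_ge1: "\<forall>p\<in>set xs. 0 < fst p \<Longrightarrow> 1 \<le> pm xs"
  using pm_pos by (simp add: Suc_le_eq)

lemma pm_gt1: "\<forall>p\<in>set xs. 1 < fst p \<Longrightarrow> xs \<noteq> [] \<Longrightarrow> 1 < pm xs"
proof (cases xs)
  case (Cons p r)
  assume a: "\<forall>p\<in>set xs. 1 < fst p"
  then have "1 \<le> pm r" using Cons by (intro pm_ge1) auto
  moreover have "1 < fst p" using a Cons by auto
  ultimately show ?thesis using Cons by (simp add: less_le_trans)
qed simp

lemma FU_aux:
  assumes "\<forall>p\<in>set xs'. 1 < fst p" "nm ((s,d)#xs')" "1 < s" "s < s'"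
    "\<forall>p\<in>set ys'. 0 < fst p" "pm ((s,d)#xs') = pm ((s',d)#ys')"
    "\<forall>y < pm ((s,d)#xs'). phi_flat ((s,d)#xs') y = phi_flat ((s',d)#ys') y"
  shows False
proof (cases xs')
  case Nil
  have "1 \<le> pm ys'" using assms(5) by (rule pm_ge1)
  then have "s' \<le> pm ((s',d)#ys')" by simp
  then show False using assms(4,6) Nil by simp
next
  case (Cons p r)
  obtain s2 d2 where p: "p = (s2,d2)" by force
  have "1 < pm xs'" using assms(1) Cons by (intro pm_gt1) auto
  then have "s < pm ((s,d)#xs')" using assms(3) by simp
  then have "phi_flat ((s,d)#xs') s = phi_flat ((s',d)#ys') s" using assms(7) by blast
  moreover have "1 < s2" using assms(1) Cons p by auto
  then have "phi_flat ((s,d)#xs') s = d2"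
    using Cons p assms(3) by (simp add: phi_flat_Cons)
  moreover have "phi_flat ((s',d)#ys') s = s * d"
    using assms(4) by (simp add: phi_flat_Cons)
  ultimately show False using assms(2) Cons p by simp
qed

lemma FU:
  "\<forall>p\<in>set xs. 1 < fst p \<Longrightarrow> \<forall>p\<in>set ys. 1 < fst p \<Longrightarrow> nm xs \<Longrightarrow> nm ys \<Longrightarrow> pm xs = pm ys
   \<Longrightarrow> (\<forall>y<pm xs. phi_flat xs y = phi_flat ys y) \<Longrightarrow> xs = ys"
proof (induction xs arbitrary: ys)
  case Nil
  then show ?case using pm_gt1[of ys] by (cases ys) auto
next
  case (Cons p xs')
  obtain s d where p: "p = (s,d)" by force
  have s1: "1 < s" using Cons.prems p by auto
  have "ys \<noteq> []" using Cons.prems(1,5) pm_gt1[of "p#xs'"] by auto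
  then obtain q ys' where ys: "ys = q # ys'" by (cases ys) auto
  obtain s' d' where q: "q = (s',d')" by force
  have s1': "1 < s'" using Cons.prems ys q by auto
  have pos: "1 \<le> pm xs'" using Cons.prems(1) by (intro pm_ge1) auto
  then have "1 < pm (p#xs')" using s1 p by (simp add: less_le_trans)
  then have "phi_flat (p#xs') 1 = phi_flat ys 1" using Cons.prems(6) by blast
  then have dd: "d = d'" using s1 s1' p q ys by (simp add: phi_flat_Cons)
  have ss: "s = s'"
  proof (rule ccontr)
    assume "s \<noteq> s'"
    then consider "s < s'" | "s' < s" by linarith
    then show False
    proof cases
      case 1
      show False
        apply (rule FU_aux[of xs' s d s' ys'])
        using Cons.prems p q ys dd 1 s1 by auto
    next
      case 2
      show False
        apply (rule FU_aux[of ys' s' d s xs'])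
        using Cons.prems p q ys dd 2 s1' by (auto simp: less_imp_le)
    qed
  qed
  have "xs' = ys'"
  proof (rule Cons.IH)
    show "pm xs' = pm ys'" using Cons.prems(5) p q ys ss s1 by simp
    show "\<forall>y<pm xs'. phi_flat xs' y = phi_flat ys' y"
    proof (intro allI impI)
      fix z assume z: "z < pm xs'"
      then have "s * z < pm (p # xs')" using p s1 by simp
      then have "phi_flat (p#xs') (s*z) = phi_flat ys (s*z)" using Cons.prems(6) by blast
      then show "phi_flat xs' z = phi_flat ys' z"
        using p q ys ss s1 by (simp add: phi_flat_Cons)
    qed
  qed (use Cons.prems ys nm_tl in auto)
  then show ?case using p q ys ss dd by simp
qed

lemma len_Node: "length (flat (Node xs)) = length (concat (map flat xs))" by simp

lemma fill_props:
  "snd (fillT X ns) = drop (length (flat X)) ns \<and>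
   (length (flat X) \<le> length ns \<longrightarrow> flat (fst (fillT X ns)) = take (length (flat X)) ns) \<and>
   congruent X (fst (fillT X ns))"
  "snd (fillL xs ns) = drop (length (concat (map flat xs))) ns \<and>
   (length (concat (map flat xs)) \<le> length ns \<longrightarrow>
      concat (map flat (fst (fillL xs ns))) = take (length (concat (map flat xs))) ns) \<and>
   list_all2 congruent xs (fst (fillL xs ns))"
proof (induction X ns and xs ns rule: fillT_fillL.induct)
  case (1 uu ns)
  then show ?case by (cases ns) auto
next
  case (2 xs ns)
  then show ?case by (auto split: prod.splits)
next
  case (3 ns)
  then show ?case by simp
next
  case (4 x xs ns)
  obtain y r where yr: "fillT x ns = (y, r)" by force
  obtain ys r' where ysr: "fillL xs r = (ys, r')" by force
  have IH1: "r = drop (length (flat x)) ns"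
    "length (flat x) \<le> length ns \<longrightarrow> flat y = take (length (flat x)) ns" "congruent x y"
    using 4(1) yr by auto
  have IH2: "r' = drop (length (concat (map flat xs))) r"
    "length (concat (map flat xs)) \<le> length r \<longrightarrow>
      concat (map flat ys) = take (length (concat (map flat xs))) r"
    "list_all2 congruent xs ys"
    using 4(2)[OF yr[symmetric] refl] ysr by auto
  show ?case using yr ysr IH1 IH2 by (auto simp: take_add add.commute)
qed

lemma flat_fill: "length ns = length (flat X) \<Longrightarrow> flat (fill X ns) = ns"
  using fill_props(1)[of X ns] by (simp add: fill_def)

lemma congruent_fill: "congruent X (fill X ns)"
  using fill_props(1)[of X ns] by (simp add: fill_def)

lemma congruent_len: "congruent X D \<Longrightarrow> length (flat X) = length (flat D)"
proof (induction X D rule: congruent.induct)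
  case (2 xs ys)
  have "list_all2 (\<lambda>x y. length (flat x) = length (flat y)) xs ys"
    using 2 by (auto simp: list_all2_conv_all_nth)
  then have "length (concat (map flat xs)) = length (concat (map flat ys))"
    by (induction rule: list_all2_induct) auto
  then show ?case by simp
qed auto

lemma congruent_refl_lemma: "congruent X X"
proof (induction X)
  case (Node xs)
  then show ?case by (auto simp: list_all2_conv_all_nth)
qed simp

lemma refines_refl: "refines X X"
proof (induction X)
  case (Leaf n) then show ?case by (simp add: tsize_def)
next
  case (Node xs)
  then show ?case by (auto simp: list_all2_conv_all_nth)
qed

lemma map_fst_lflat: "congruent X D \<Longrightarrow> map fst (lflat (X, D)) = flat X"
  by (simp add: lflat_def congruent_len)

lemma map_snd_lflat: "congruent X D \<Longrightarrow> map snd (lflat (X, D)) = flat D"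
  by (simp add: lflat_def congruent_len)

lemma lsize_lflat: "congruent (fst L) (snd L) \<Longrightarrow> lsize L = pm (lflat L)"
  by (cases L) (simp add: lsize_def tsize_def map_fst_lflat)

lemma depth0: "depth X = 0 \<Longrightarrow> \<exists>n. X = Leaf n"
  by (cases X) auto

lemma fold_max_ge': "a \<le> fold max ys (a::nat)"
  by (induction ys arbitrary: a) (simp_all, metis le_trans max.cobounded2)

lemma fold_max_ge: "\<forall>x\<in>set ys. x \<le> fold max ys (a::nat)"
  by (induction ys arbitrary: a) (simp_all, metis fold_max_ge' le_trans max.cobounded1)

lemma coalesced_over_refl: "congruent X D \<Longrightarrow> \<forall>x\<in>set (flat X). 1 < x \<Longrightarrow> coalesced_over X D X"
proof (induction X arbitrary: D)
  case (Leaf n)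
  then obtain d where "D = Leaf d" by (cases D) auto
  then show ?case using Leaf by (simp add: coalesced_def tsize_def)
next
  case (Node xs)
  then obtain ds where D: "D = Node ds" by (cases D) auto
  then have l: "list_all2 congruent xs ds" using Node by simp
  show ?case using D l Node
    by (auto simp: list_all2_conv_all_nth)
qed

function blocks :: "ntuple \<Rightarrow> ntuple \<Rightarrow> ntuple \<Rightarrow> layout list" where
  "blocks X' D (Leaf n) = [(X', D)]"
| "blocks (Node xs') (Node ds) (Node xs) =
     concat (map (\<lambda>i. blocks (xs' ! i) (ds ! i) (xs ! i)) [0..<length xs])"
| "blocks (Leaf a) D (Node xs) = []"
| "blocks (Node xs') (Leaf d) (Node xs) = []"
  by pat_completeness auto
termination
  by (relation "measure (\<lambda>(_, _, x). size x)") (auto simp: coal_over_term_aux)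

lemma zip_concat:
  "list_all2 (\<lambda>a b. length a = length b) as bs \<Longrightarrow>
   zip (concat as) (concat bs) = concat (map (\<lambda>(a,b). zip a b) (zip as bs))"
  by (induction rule: list_all2_induct) auto

lemma map_idx_eq: "map (\<lambda>i. f (xs ! i)) [0..<length xs] = map f xs"
  by (intro nth_equalityI) auto

lemma concat_map_concat: "concat (map g (concat xss)) = concat (map (\<lambda>xs. concat (map g xs)) xss)"
  by (induction xss) auto

lemma blocks_props:
  "refines X' X \<Longrightarrow> congruent X' D \<Longrightarrow>
     map lsize (blocks X' D X) = flat X \<and>
     concat (map lflat (blocks X' D X)) = lflat (X', D) \<and>
     (\<forall>b\<in>set (blocks X' D X). congruent (fst b) (snd b)) \<and>
     (coalesced_over X' D X \<longleftrightarrow> (\<forall>b\<in>set (blocks X' D X). coalesced b))"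
proof (induction X' D X rule: blocks.induct)
  case (1 X' D n)
  then show ?case by (cases X') (auto simp: lsize_def)
next
  case (2 xs' ds xs)
  have len: "length xs' = length xs" "length ds = length xs"
    using 2(2,3) by (auto simp: list_all2_conv_all_nth)
  have r: "\<And>i. i < length xs \<Longrightarrow> refines (xs'!i) (xs!i) \<and> congruent (xs'!i) (ds!i)"
    using 2(2,3) len by (auto simp: list_all2_conv_all_nth)
  note IH = 2(1)[OF _ r[THEN conjunct1] r[THEN conjunct2]]
  have A: "map lsize (blocks (Node xs') (Node ds) (Node xs)) = flat (Node xs)"
  proof -
    have "map lsize (blocks (Node xs') (Node ds) (Node xs)) =
          concat (map (\<lambda>i. flat (xs ! i)) [0..<length xs])"
    proof -
      have "\<forall>i<length xs. map lsize (blocks (xs' ! i) (ds ! i) (xs ! i)) = flat (xs ! i)"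
        using IH by auto
      then have "map (\<lambda>i. map lsize (blocks (xs' ! i) (ds ! i) (xs ! i))) [0..<length xs] = map (\<lambda>i. flat (xs ! i)) [0..<length xs]"
        by (intro map_cong) auto
      then show ?thesis by (simp only: blocks.simps map_concat map_map o_def)
    qed
    also have "\<dots> = flat (Node xs)" by (simp add: map_idx_eq)
    finally show ?thesis .
  qed
  have B: "concat (map lflat (blocks (Node xs') (Node ds) (Node xs))) = lflat (Node xs', Node ds)"
  proof -
    have "concat (map lflat (blocks (Node xs') (Node ds) (Node xs))) =
          concat (map (\<lambda>i. lflat (xs'!i, ds!i)) [0..<length xs])"
    proof -
      have "\<forall>i<length xs. concat (map lflat (blocks (xs' ! i) (ds ! i) (xs ! i))) = lflat (xs'!i, ds!i)"
        using IH by auto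
      then have "map (\<lambda>i. concat (map lflat (blocks (xs' ! i) (ds ! i) (xs ! i)))) [0..<length xs] = map (\<lambda>i. lflat (xs'!i, ds!i)) [0..<length xs]"
        by (intro map_cong) auto
      then show ?thesis by (simp only: blocks.simps concat_map_concat map_map o_def)
    qed
    also have "\<dots> = concat (map (\<lambda>(a,b). zip a b) (zip (map flat xs') (map flat ds)))"
    proof -
      have "map (\<lambda>i. lflat (xs'!i, ds!i)) [0..<length xs] = map (\<lambda>(a,b). zip a b) (zip (map flat xs') (map flat ds))"
        using len by (intro nth_equalityI) (auto simp: lflat_def)
      then show ?thesis by (simp only:)
    qed
    also have "\<dots> = zip (concat (map flat xs')) (concat (map flat ds))"
      using len r congruent_len
      by (intro zip_concat[symmetric]) (auto simp: list_all2_conv_all_nth)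
    finally show ?thesis by (simp add: lflat_def)
  qed
  have C: "\<forall>b\<in>set (blocks (Node xs') (Node ds) (Node xs)). congruent (fst b) (snd b)"
    using IH by auto
  have D: "coalesced_over (Node xs') (Node ds) (Node xs) \<longleftrightarrow>
       (\<forall>b\<in>set (blocks (Node xs') (Node ds) (Node xs)). coalesced b)"
    using IH len by auto
  show ?case using A B C D by blast
qed auto

lemma blocks_length:
  "refines X' X \<Longrightarrow> congruent X' D \<Longrightarrow> length (blocks X' D X) = length (flat X)"
  using blocks_props by (metis length_map)

lemma blocks_inj:
  "refines X1 X \<Longrightarrow> refines X2 X \<Longrightarrow> congruent X1 D1 \<Longrightarrow> congruent X2 D2 \<Longrightarrow>
   blocks X1 D1 X = blocks X2 D2 X \<Longrightarrow> X1 = X2 \<and> D1 = D2"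
proof (induction X arbitrary: X1 D1 X2 D2)
  case (Leaf n) then show ?case by simp
next
  case (Node xs)
  obtain xs1 where X1: "X1 = Node xs1" using Node.prems(1) by (cases X1) auto
  obtain xs2 where X2: "X2 = Node xs2" using Node.prems(2) by (cases X2) auto
  obtain ds1 where D1: "D1 = Node ds1" using Node.prems(3) X1 by (cases D1) auto
  obtain ds2 where D2: "D2 = Node ds2" using Node.prems(4) X2 by (cases D2) auto
  have len: "length xs1 = length xs" "length ds1 = length xs" "length xs2 = length xs" "length ds2 = length xs"
    using Node.prems X1 X2 D1 D2 by (auto simp: list_all2_conv_all_nth)
  have r: "\<And>i. i < length xs \<Longrightarrow> refines (xs1!i) (xs!i) \<and> congruent (xs1!i) (ds1!i)
       \<and> refines (xs2!i) (xs!i) \<and> congruent (xs2!i) (ds2!i)"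
    using Node.prems X1 X2 D1 D2 len by (auto simp: list_all2_conv_all_nth)
  have eq: "map (\<lambda>i. blocks (xs1 ! i) (ds1 ! i) (xs ! i)) [0..<length xs] =
            map (\<lambda>i. blocks (xs2 ! i) (ds2 ! i) (xs ! i)) [0..<length xs]"
    using Node.prems(5) X1 X2 D1 D2 r blocks_length
    by (subst concat_eq_concat_iff[symmetric]) (auto simp: set_zip)
  have "\<And>i. i < length xs \<Longrightarrow> xs1 ! i = xs2 ! i \<and> ds1 ! i = ds2 ! i"
  proof -
    fix i assume i: "i < length xs"
    have "blocks (xs1 ! i) (ds1 ! i) (xs ! i) = blocks (xs2 ! i) (ds2 ! i) (xs ! i)"
      using eq i by (metis (no_types, lifting) diff_zero length_upt nth_map nth_upt add_0)
    then show "xs1 ! i = xs2 ! i \<and> ds1 ! i = ds2 ! i"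
      using Node.IH[of "xs!i"] r[OF i] i by auto
  qed
  then show ?case using X1 X2 D1 D2 len by (auto intro: nth_equalityI)
qed

section \<open>Coalesced layouts are determined by their function\<close>

lemma coalesced_shape:
  assumes "valid_layout L" "coalesced L"
  shows "L = layout_of_flat (lflat L) \<and>
         (L = (Leaf 1, Leaf 0) \<or> (lflat L \<noteq> [] \<and> (\<forall>p\<in>set (lflat L). 1 < fst p) \<and> nm (lflat L)))"
proof -
  obtain X D where L: "L = (X, D)" by force
  have cg: "congruent X D" and pos: "\<forall>x\<in>set (flat X). 0 < x"
    using assms(1) L by (auto simp: valid_layout_def positive_nt_def)
  consider "L = (Leaf 1, Leaf 0)" | "depth X = 0" "tsize X > 1"
    | "depth X = 1" "rank X > 1" "flat_coalesced (lflat L)"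
    using assms(2) L by (auto simp: coalesced_def)
  then show ?thesis
  proof cases
    case 1 then show ?thesis by (simp add: lflat_def layout_of_flat_def)
  next
    case 2
    then obtain s where X: "X = Leaf s" using depth0 by blast
    then obtain d where D: "D = Leaf d" using cg by (cases D) auto
    show ?thesis using X D L 2 by (auto simp: lflat_def layout_of_flat_def tsize_def)
  next
    case 3
    then obtain xs where X: "X = Node xs" by (cases X) auto
    have "\<forall>x\<in>set (map depth xs). x \<le> 0" using 3(1) X fold_max_ge[of "map depth xs" 0] by simp
    then have "\<forall>x\<in>set xs. depth x = 0" by auto
    then have xsL: "xs = map (Leaf \<circ> (\<lambda>x. hd (flat x))) xs"
      by (intro nth_equalityI) (auto, metis depth0 flat.simps(1) list.sel(1) nth_mem)
    have "xs = map Leaf (map (\<lambda>x. hd (flat x)) xs)" unfolding map_map by (rule xsL)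
    then obtain ns where ns: "xs = map Leaf ns" by blast
    obtain ds where D: "D = Node ds" using cg X by (cases D) auto
    have "list_all2 congruent (map Leaf ns) ds" using cg X D ns by simp
    then have "\<forall>i<length ds. \<exists>d. ds ! i = Leaf d"
    proof (intro allI impI)
      fix i assume i: "i < length ds" and la: "list_all2 congruent (map Leaf ns) ds"
      then have "congruent (Leaf (ns!i)) (ds!i)" by (auto simp: list_all2_conv_all_nth)
      then show "\<exists>d. ds!i = Leaf d" by (cases "ds!i") auto
    qed
    then have "ds = map Leaf (map (\<lambda>x. case x of Leaf d \<Rightarrow> d) ds)"
      by (intro nth_equalityI) auto
    then obtain es where es: "ds = map Leaf es" by blast
    have lens: "length es = length ns" using cg X D ns es list_all2_lengthD by fastforce
    have fl: "lflat L = zip ns es" using L X D ns es by (simp add: lflat_def o_def)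
    have rk: "length ns > 1" using 3(2) X ns by simp
    have eqL: "L = layout_of_flat (lflat L)"
      using fl rk lens L X D ns es by (simp add: layout_of_flat_def flip: map_map)
    have fc: "flat_coalesced (lflat L)" using 3 by simp
    have "\<forall>p\<in>set (lflat L). 1 < fst p"
    proof
      fix p assume p: "p \<in> set (lflat L)"
      then have "p \<in> set (zip ns es)" using fl by simp
      then have "fst p \<in> set ns" by (metis set_zip_leftD prod.collapse)
      then have "0 < fst p" using pos X ns by simp
      moreover have "fst p \<noteq> 1" using fc p unfolding flat_coalesced_def by (metis in_set_conv_nth)
      ultimately show "1 < fst p" by simp
    qed
    moreover have "nm (lflat L)"
      using fc unfolding flat_coalesced_def by (intro nth_nm) metis
    moreover have "lflat L \<noteq> []" using fl rk lens by (metis length_greater_0_conv length_zip min.idem order.strict_trans zero_less_one)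
    ultimately show ?thesis using eqL by blast
  qed
qed

lemma coalesced_unique:
  assumes "valid_layout L1" "coalesced L1" "valid_layout L2" "coalesced L2"
    "lsize L1 = lsize L2" "\<forall>y < lsize L1. phi L1 y = phi L2 y"
  shows "L1 = L2"
proof -
  note s1 = coalesced_shape[OF assms(1,2)] and s2 = coalesced_shape[OF assms(3,4)]
  have ls1: "lsize L1 = pm (lflat L1)" using assms(1) by (simp add: lsize_lflat valid_layout_def)
  have ls2: "lsize L2 = pm (lflat L2)" using assms(3) by (simp add: lsize_lflat valid_layout_def)
  show ?thesis
  proof (cases "L1 = (Leaf 1, Leaf 0)")
    case True
    then have "lsize L2 = 1" using assms(5) by (simp add: lsize_def tsize_def)
    then show ?thesis using True s2 ls2 pm_gt1[of "lflat L2"] by auto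
  next
    case False
    then have a1: "lflat L1 \<noteq> [] \<and> (\<forall>p\<in>set (lflat L1). 1 < fst p) \<and> nm (lflat L1)" using s1 by blast
    then have "lsize L1 > 1" using ls1 pm_gt1 by auto
    then have "L2 \<noteq> (Leaf 1, Leaf 0)" using assms(5) by (auto simp: lsize_def tsize_def)
    then have a2: "lflat L2 \<noteq> [] \<and> (\<forall>p\<in>set (lflat L2). 1 < fst p) \<and> nm (lflat L2)" using s2 by blast
    have "lflat L1 = lflat L2"
      using a1 a2 assms(5,6) ls1 ls2 by (intro FU) (auto simp: phi_def)
    then show ?thesis using s1 s2 by metis
  qed
qed

lemma pm_concat: "pm (concat xss) = prod_list (map pm xss)"
  by (induction xss) auto

lemma phi_concat_block:
  assumes "\<forall>b\<in>set bs. \<forall>p\<in>set b. 0 < fst p" "i < length bs" "y < pm (bs!i)"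
  shows "phi_flat (concat bs) (y * prod_list (map pm (take i bs))) = phi_flat (bs!i) y"
proof -
  let ?P = "prod_list (map pm (take i bs))"
  have bs: "bs = take i bs @ bs!i # drop (Suc i) bs" using assms(2) by (simp add: id_take_nth_drop)
  have c: "concat bs = concat (take i bs) @ (bs!i @ concat (drop (Suc i) bs))"
    by (subst bs) simp
  have posT: "\<forall>p\<in>set (concat (take i bs)). 0 < fst p" using assms(1) by (auto dest: in_set_takeD)
  have pmT: "pm (concat (take i bs)) = ?P" by (simp add: pm_concat)
  have P0: "0 < ?P" using pm_pos[OF posT] pmT by simp
  have "phi_flat (concat (take i bs)) (y * ?P) = phi_flat (concat (take i bs)) ((y * ?P) mod pm (concat (take i bs)))"
    using phi_flat_mod[OF posT] by simp
  also have "\<dots> = 0" using pmT by simp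
  finally have z: "phi_flat (concat (take i bs)) (y * ?P) = 0" .
  have "y div pm (bs ! i) = 0" using assms(3) by simp
  then show ?thesis using c z P0 pmT by (simp add: phi_flat_append)
qed

lemma prod_list_pos: "\<forall>x\<in>set xs. 0 < (x::nat) \<Longrightarrow> 0 < prod_list xs"
  by (induction xs) auto

lemma prod_take_lt:
  assumes "\<forall>x\<in>set xs. 0 < (x::nat)" "i < length xs" "y < xs ! i"
  shows "y * prod_list (take i xs) < prod_list xs"
proof -
  have xs: "xs = take i xs @ xs!i # drop (Suc i) xs" using assms(2) by (simp add: id_take_nth_drop)
  have "0 < prod_list (take i xs)" using assms(1) by (intro prod_list_pos) (auto dest: in_set_takeD)
  then have "y * prod_list (take i xs) < xs!i * prod_list (take i xs)" using assms(3) by simp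
  also have "\<dots> \<le> xs!i * prod_list (take i xs) * prod_list (drop (Suc i) xs)"
  proof -
    have "0 < prod_list (drop (Suc i) xs)" using assms(1) by (intro prod_list_pos) (auto dest: in_set_dropD)
    then show ?thesis by simp
  qed
  also have "\<dots> = prod_list xs" by (subst (3) xs) simp
  finally show ?thesis .
qed

lemma pm_lflat_block: "congruent (fst b) (snd b) \<Longrightarrow> pm (lflat b) = lsize b"
  by (simp add: lsize_lflat)

lemma valid_block: "congruent (fst b) (snd b) \<Longrightarrow> \<forall>p\<in>set (lflat b). 0 < fst p \<Longrightarrow> valid_layout b"
proof -
  assume c: "congruent (fst b) (snd b)" and p: "\<forall>p\<in>set (lflat b). 0 < fst p"
  obtain X D where b: "b = (X, D)" by force
  have "flat X = map fst (lflat b)" using map_fst_lflat[of X D] c b by simp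
  then show ?thesis using c p b by (auto simp: valid_layout_def positive_nt_def)
qed

lemma valid_pos: "valid_layout C \<Longrightarrow> \<forall>p\<in>set (lflat C). 0 < fst p"
proof
  fix p assume v: "valid_layout C" and p: "p \<in> set (lflat C)"
  obtain X D where C: "C = (X, D)" by force
  have cg: "congruent X D" using v C by (simp add: valid_layout_def)
  have "fst p \<in> set (map fst (lflat (X, D)))" using p C by auto
  then have "fst p \<in> set (flat X)" using map_fst_lflat[OF cg] by simp
  then show "0 < fst p" using v C by (auto simp: valid_layout_def positive_nt_def)
qed

lemma comp_unique:
  assumes v1: "valid_layout C1" and v2: "valid_layout C2"
    and r1: "refines (fst C1) X" and r2: "refines (fst C2) X"
    and c1: "coalesced_over (fst C1) (snd C1) X" and c2: "coalesced_over (fst C2) (snd C2) X"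
    and ph: "\<forall>x < tsize X. phi C1 x = phi C2 x"
  shows "C1 = C2"
proof -
  obtain X1 D1 where C1: "C1 = (X1, D1)" by force
  obtain X2 D2 where C2: "C2 = (X2, D2)" by force
  have cg1: "congruent X1 D1" and cg2: "congruent X2 D2"
    using v1 v2 C1 C2 by (auto simp: valid_layout_def)
  have pos1: "\<forall>p\<in>set (lflat C1). 0 < fst p" using valid_pos[OF v1] .
  have pos2: "\<forall>p\<in>set (lflat C2). 0 < fst p" using valid_pos[OF v2] .
  define b1 where "b1 = blocks X1 D1 X"
  define b2 where "b2 = blocks X2 D2 X"
  note p1 = blocks_props[OF r1[unfolded C1 fst_conv] cg1, folded b1_def]
  note p2 = blocks_props[OF r2[unfolded C2 fst_conv] cg2, folded b2_def]
  have len1: "length b1 = length (flat X)" using p1 by (metis length_map)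
  have len2: "length b2 = length (flat X)" using p2 by (metis length_map)
  have lf1: "concat (map lflat b1) = lflat C1" using p1 C1 by simp
  have lf2: "concat (map lflat b2) = lflat C2" using p2 C2 by simp
  have bpos1: "\<forall>b\<in>set (map lflat b1). \<forall>p\<in>set b. 0 < fst p"
  proof (intro ballI)
    fix b p assume "b \<in> set (map lflat b1)" "p \<in> set b"
    then have "p \<in> set (concat (map lflat b1))" by auto
    then show "0 < fst p" using pos1 lf1 by simp
  qed
  have bpos2: "\<forall>b\<in>set (map lflat b2). \<forall>p\<in>set b. 0 < fst p"
  proof (intro ballI)
    fix b p assume "b \<in> set (map lflat b2)" "p \<in> set b"
    then have "p \<in> set (concat (map lflat b2))" by auto
    then show "0 < fst p" using pos2 lf2 by simp
  qed
  have cgb1: "\<forall>b\<in>set b1. congruent (fst b) (snd b)" using p1 by blast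
  have cgb2: "\<forall>b\<in>set b2. congruent (fst b) (snd b)" using p2 by blast
  have cob1: "\<forall>b\<in>set b1. coalesced b" using p1 c1 C1 by simp
  have cob2: "\<forall>b\<in>set b2. coalesced b" using p2 c2 C2 by simp
  have flatpos: "\<forall>x\<in>set (flat X). 0 < x"
  proof
    fix x assume "x \<in> set (flat X)"
    then have "x \<in> set (map lsize b1)" using p1 by simp
    then obtain b where b: "b \<in> set b1" "x = lsize b" by auto
    have "\<forall>p\<in>set (lflat b). 0 < fst p" using bpos1 b by simp
    then have "0 < pm (lflat b)" by (rule pm_pos)
    then show "0 < x" using b pm_lflat_block cgb1 by simp
  qed
  have "b1 = b2"
  proof (rule nth_equalityI)
    show "length b1 = length b2" using len1 len2 by simp
    fix i assume i: "i < length b1"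
    have i2: "i < length b2" using i len1 len2 by simp
    have cb1: "congruent (fst (b1!i)) (snd (b1!i))" using cgb1 i by simp
    have cb2: "congruent (fst (b2!i)) (snd (b2!i))" using cgb2 i2 by simp
    have vb1: "valid_layout (b1!i)"
      using cb1 bpos1 i by (intro valid_block) auto
    have vb2: "valid_layout (b2!i)"
      using cb2 bpos2 i2 by (intro valid_block) auto
    have co1: "coalesced (b1!i)" using cob1 i by simp
    have co2: "coalesced (b2!i)" using cob2 i2 by simp
    have ls1: "lsize (b1!i) = flat X ! i" using p1 i by (metis nth_map)
    have ls2: "lsize (b2!i) = flat X ! i" using p2 i2 by (metis nth_map)
    have pre1: "prod_list (map pm (take i (map lflat b1))) = prod_list (take i (flat X))"
    proof -
      have "map pm (map lflat b1) = map lsize b1" using cgb1 pm_lflat_block by auto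
      then show ?thesis using p1 by (simp add: take_map[symmetric])
    qed
    have pre2: "prod_list (map pm (take i (map lflat b2))) = prod_list (take i (flat X))"
    proof -
      have "map pm (map lflat b2) = map lsize b2" using cgb2 pm_lflat_block by auto
      then show ?thesis using p2 by (simp add: take_map[symmetric])
    qed
    have "\<forall>y < lsize (b1!i). phi (b1!i) y = phi (b2!i) y"
    proof (intro allI impI)
      fix y assume y: "y < lsize (b1!i)"
      have y1: "y < pm (map lflat b1 ! i)" using y i pm_lflat_block[OF cb1] by simp
      have y2: "y < pm (map lflat b2 ! i)" using y i2 ls1 ls2 pm_lflat_block[OF cb2] by simp
      have lt: "y * prod_list (take i (flat X)) < tsize X"
        unfolding tsize_def using flatpos i len1 y ls1 by (intro prod_take_lt) auto
      have "phi (b1!i) y = phi_flat (concat (map lflat b1)) (y * prod_list (take i (flat X)))"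
        using phi_concat_block[OF bpos1 _ y1] i pre1 by (simp add: phi_def)
      also have "\<dots> = phi C1 (y * prod_list (take i (flat X)))" using lf1 by (simp add: phi_def)
      also have "\<dots> = phi C2 (y * prod_list (take i (flat X)))" using ph lt by simp
      also have "\<dots> = phi_flat (concat (map lflat b2)) (y * prod_list (take i (flat X)))"
        using lf2 by (simp add: phi_def)
      also have "\<dots> = phi (b2!i) y"
        using phi_concat_block[OF bpos2 _ y2] i2 pre2 by (simp add: phi_def)
      finally show "phi (b1!i) y = phi (b2!i) y" .
    qed
    then show "b1 ! i = b2 ! i"
      using coalesced_unique[OF vb1 co1 vb2 co2] ls1 ls2 by simp
  qed
  then have "X1 = X2 \<and> D1 = D2"
    using blocks_inj[OF r1[unfolded C1 fst_conv] r2[unfolded C2 fst_conv] cg1 cg2] b1_def b2_def by simp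
  then show ?thesis using C1 C2 by simp
qed

lemma lcompose_eqI:
  assumes "valid_layout C" "refines (fst C) (fst A)" "coalesced_over (fst C) (snd C) (fst A)"
    "\<forall>x < lsize A. phi A x < lsize B" "\<forall>x < lsize A. phi C x = phi B (phi A x)"
  shows "lcompose B A = C"
  unfolding lcompose_def
proof (rule the_equality)
  show "valid_layout C \<and> refines (fst C) (fst A) \<and> coalesced_over (fst C) (snd C) (fst A) \<and>
    (\<forall>x<lsize A. phi A x < lsize B) \<and> (\<forall>x<lsize A. phi C x = phi B (phi A x))"
    using assms by blast
  fix C' assume "valid_layout C' \<and> refines (fst C') (fst A) \<and> coalesced_over (fst C') (snd C') (fst A) \<and>
    (\<forall>x<lsize A. phi A x < lsize B) \<and> (\<forall>x<lsize A. phi C' x = phi B (phi A x))"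
  then show "C' = C"
    using assms by (intro comp_unique[of C' C "fst A"]) (auto simp: lsize_def)
qed

section \<open>Mixed radix\<close>

lemma digits:
  assumes "\<forall>x\<in>set ts. 0 < (x::nat)" "\<forall>j<length ts. Z j < ts ! j"
  shows "(\<Sum>j<length ts. Z j * prod_list (take j ts)) < prod_list ts \<and>
         (\<forall>k<length ts. (\<Sum>j<length ts. Z j * prod_list (take j ts)) div prod_list (take k ts) mod ts ! k = Z k)"
  using assms
proof (induction ts arbitrary: Z)
  case Nil then show ?case by simp
next
  case (Cons t ts)
  let ?S' = "\<Sum>j<length ts. Z (Suc j) * prod_list (take j ts)"
  have IH: "?S' < prod_list ts \<and>
    (\<forall>k<length ts. ?S' div prod_list (take k ts) mod ts ! k = Z (Suc k))"
  proof -
    have "\<forall>j<length ts. Z (Suc j) < ts ! j"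
    proof (intro allI impI)
      fix j assume "j < length ts"
      then show "Z (Suc j) < ts ! j" using Cons.prems(2)[rule_format, of "Suc j"] by simp
    qed
    then show ?thesis using Cons.IH[of "\<lambda>j. Z (Suc j)"] Cons.prems by auto
  qed
  have t: "0 < t" "Z 0 < t" using Cons.prems by auto
  have S: "(\<Sum>j<length (t#ts). Z j * prod_list (take j (t#ts))) = Z 0 + t * ?S'"
    unfolding length_Cons sum.lessThan_Suc_shift by (simp add: sum_distrib_left algebra_simps)
  have lt: "Z 0 + t * ?S' < t * prod_list ts"
  proof -
    have "Z 0 + t * ?S' < t + t * ?S'" using t by simp
    also have "\<dots> = t * (?S' + 1)" by simp
    also have "\<dots> \<le> t * prod_list ts" using IH by (intro mult_le_mono2) simp
    finally show ?thesis .
  qed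
  have dg: "\<forall>k<length (t#ts). (Z 0 + t * ?S') div prod_list (take k (t#ts)) mod (t#ts) ! k = Z k"
  proof (intro allI impI)
    fix k assume k: "k < length (t#ts)"
    show "(Z 0 + t * ?S') div prod_list (take k (t#ts)) mod (t#ts) ! k = Z k"
    proof (cases k)
      case 0 then show ?thesis using t by simp
    next
      case (Suc k')
      have "(Z 0 + t * ?S') div (t * prod_list (take k' ts)) = ?S' div prod_list (take k' ts)"
        using t by (simp add: div_mult2_eq)
      then show ?thesis using Suc IH k by simp
    qed
  qed
  show ?case using S lt dg by simp
qed

lemma phi_flat_sum: "phi_flat xs x = (\<Sum>i<length xs. (x div pm (take i xs) mod fst (xs!i)) * snd (xs!i))"
  by (simp add: phi_flat_def take_map)

lemma phi_identity_sum:
  "phi_flat (map (\<lambda>j. (ts!j, w j)) [0..<length ts]) y =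
   (\<Sum>j<length ts. (y div prod_list (take j ts) mod ts!j) * w j)"
proof -
  have "\<And>j. j < length ts \<Longrightarrow> pm (take j (map (\<lambda>j. (ts!j, w j)) [0..<length ts])) = prod_list (take j ts)"
  proof -
    fix j assume "j < length ts"
    have "map fst (map (\<lambda>j. (ts!j, w j)) [0..<length ts]) = ts" by (simp add: o_def map_nth)
    then show "pm (take j (map (\<lambda>j. (ts!j, w j)) [0..<length ts])) = prod_list (take j ts)"
      by (metis take_map)
  qed
  then show ?thesis by (simp add: phi_flat_sum)
qed

lemma sum_perm:
  assumes "distinct \<pi>" "set \<pi> = {..<length \<pi>}"
  shows "(\<Sum>k<length \<pi>. F (\<pi>!k)) = (\<Sum>j<length \<pi>. (F j :: nat))"
proof -
  have "(\<Sum>k<length \<pi>. F (\<pi>!k)) = sum_list (map F \<pi>)"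
    by (simp add: sum_list_sum_nth atLeast0LessThan)
  also have "\<dots> = sum F (set \<pi>)" using assms(1) by (simp add: sum.distinct_set_conv_list)
  finally show ?thesis using assms(2) by simp
qed

lemma perm_phi:
  fixes \<pi> :: "nat list"
  assumes pos: "\<forall>x\<in>set ts. 0 < (x::nat)" and d: "distinct \<pi>" and s: "set \<pi> = {..<length ts}"
  shows "phi_flat (map (\<lambda>j. (ts!j, prod_list (take j ts))) \<pi>) x < prod_list ts \<and>
    phi_flat (map (\<lambda>j. (ts!j, w j)) \<pi>) x =
    phi_flat (map (\<lambda>j. (ts!j, w j)) [0..<length ts]) (phi_flat (map (\<lambda>j. (ts!j, prod_list (take j ts))) \<pi>) x)"
proof -
  have lp: "length \<pi> = length ts" using d s by (metis card_lessThan distinct_card)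
  define sp where "sp = map (nth ts) \<pi>"
  define dig where "dig k = x div prod_list (take k sp) mod sp ! k" for k
  define Z :: "nat \<Rightarrow> nat" where "Z j = dig (THE k. k < length \<pi> \<and> \<pi>!k = j)" for j
  have Zp: "\<And>k. k < length \<pi> \<Longrightarrow> Z (\<pi>!k) = dig k"
  proof -
    fix k assume k: "k < length \<pi>"
    have "(THE k'. k' < length \<pi> \<and> \<pi>!k' = \<pi>!k) = k"
      using d k by (intro the_equality) (auto simp: nth_eq_iff_index_eq)
    then show "Z (\<pi>!k) = dig k" by (simp add: Z_def)
  qed
  have gen: "phi_flat (map (\<lambda>j. (ts!j, v j)) \<pi>) x = (\<Sum>j<length ts. Z j * v j)" for v
  proof -
    have "phi_flat (map (\<lambda>j. (ts!j, v j)) \<pi>) x = (\<Sum>k<length \<pi>. dig k * v (\<pi>!k))"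
      unfolding phi_flat_sum dig_def sp_def by (simp add: take_map[symmetric] o_def)
    also have "\<dots> = (\<Sum>k<length \<pi>. Z (\<pi>!k) * v (\<pi>!k))" using Zp by simp
    also have "\<dots> = (\<Sum>j<length \<pi>. Z j * v j)"
      using sum_perm[OF d, of "\<lambda>j. Z j * v j"] s lp by simp
    finally show ?thesis using lp by simp
  qed
  have Zlt: "\<forall>j<length ts. Z j < ts ! j"
  proof (intro allI impI)
    fix j assume j: "j < length ts"
    then have "j \<in> set \<pi>" using s by simp
    then obtain k where k: "k < length \<pi>" "\<pi>!k = j" by (metis in_set_conv_nth)
    have "0 < sp ! k" using pos k lp j unfolding sp_def by simp
    then have "dig k < sp ! k" by (simp add: dig_def)
    then show "Z j < ts ! j" using Zp k sp_def by auto
  qed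
  note D = digits[OF pos Zlt]
  have "phi_flat (map (\<lambda>j. (ts!j, w j)) [0..<length ts]) (\<Sum>j<length ts. Z j * prod_list (take j ts))
        = (\<Sum>j<length ts. Z j * w j)"
    unfolding phi_identity_sum using D by simp
  then show ?thesis using gen[of "\<lambda>j. prod_list (take j ts)"] gen[of w] D by simp
qed

lemma gaps_concat:
  "sorted_wrt (<) I \<Longrightarrow> \<forall>i\<in>set I. lo \<le> i \<and> i < m \<Longrightarrow>
   concat (map (\<lambda>(b,e). [b..<e]) (zip (lo # map Suc I) (I @ [m]))) = filter (\<lambda>j. j \<notin> set I) [lo..<m]"
proof (induction I arbitrary: lo)
  case Nil then show ?case by simp
next
  case (Cons i I)
  have IH: "concat (map (\<lambda>(b,e). [b..<e]) (zip (Suc i # map Suc I) (I @ [m]))) = filter (\<lambda>j. j \<notin> set I) [Suc i..<m]"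
    using Cons by (intro Cons.IH) auto
  have im: "lo \<le> i" "i < m" using Cons.prems by auto
  have split: "[lo..<m] = [lo..<i] @ i # [Suc i..<m]"
  proof -
    have "[lo..<m] = [lo..<i] @ [i..<m]" using upt_add_eq_append[of lo i "m - i"] im by simp
    then show ?thesis using im by (simp add: upt_conv_Cons)
  qed
  have f1: "filter (\<lambda>j. j \<notin> set (i # I)) [lo..<i] = [lo..<i]"
    using Cons.prems by (intro filter_True) auto
  have f2: "filter (\<lambda>j. j \<notin> set (i # I)) [Suc i..<m] = filter (\<lambda>j. j \<notin> set I) [Suc i..<m]"
    by (intro filter_cong) auto
  show ?case using IH split f1 f2 by simp
qed

lemma prod_list_eq1: "prod_list (xs::nat list) = 1 \<Longrightarrow> x \<in> set xs \<Longrightarrow> x = 1"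
  by (induction xs) auto

lemma mset_concat_filter:
  "mset (concat (map f (filter P xs))) + mset (concat (map f (filter (\<lambda>x. \<not> P x) xs))) = mset (concat (map f xs))"
  by (induction xs) auto

lemma nm_sorted: "sorted_wrt (\<lambda>x y. snd y \<noteq> fst x * snd x) xs \<Longrightarrow> nm xs"
  by (induction xs rule: nm.induct) auto

locale setting =
  fixes ss ts :: "nat list" and a w :: "nat \<Rightarrow> nat"
  assumes pos: "\<forall>x\<in>set ts. 0 < x"
    and ainj: "inj_on a {..<length ss}"
    and arange: "\<forall>i<length ss. a i < length ts"
    and ashape: "\<forall>i<length ss. ss ! i = ts ! a i"
    and ne1: "\<forall>i<length ss. ss ! i \<noteq> 1"
begin

abbreviation "n \<equiv> length ss"
abbreviation "m \<equiv> length ts"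

definition P :: "nat \<Rightarrow> nat" where "P j = prod_list (take j ts)"
definition img :: "nat list" where "img = filter (\<lambda>j. j \<in> a ` {..<n}) [0..<m]"
definition js :: "nat list" where "js = filter (\<lambda>j. j \<notin> a ` {..<n}) [0..<m]"
definition gapsAll :: "(nat \<times> nat) list" where "gapsAll = zip (0 # map Suc img) (img @ [m])"
definition seg :: "nat \<Rightarrow> nat \<Rightarrow> nat list" where "seg b e = map (nth ts) [b..<e]"
definition nontriv :: "nat \<times> nat \<Rightarrow> bool" where "nontriv g = (prod_list (seg (fst g) (snd g)) \<noteq> 1)"
definition G :: "(nat \<times> nat) list" where "G = filter nontriv gapsAll"
definition Q :: "(nat \<times> nat) list" where "Q = map (\<lambda>(b,e). (prod_list (seg b e), P b)) G"

lemma set_img: "set img = a ` {..<n}"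
  using arange by (auto simp: img_def)

lemma img_sorted: "sorted_wrt (<) img"
  unfolding img_def by (rule sorted_wrt_filter) simp

lemma img_range: "\<forall>j\<in>set img. j < m"
  by (auto simp: img_def)

lemma js_eq: "js = filter (\<lambda>j. j \<notin> set img) [0..<m]"
  unfolding js_def set_img ..

end

context setting begin

lemma gaps_concat_js: "concat (map (\<lambda>(b,e). [b..<e]) gapsAll) = js"
  unfolding gapsAll_def js_eq using img_sorted img_range
  by (intro gaps_concat) auto

lemma take_split: "b \<le> e \<Longrightarrow> e \<le> m \<Longrightarrow> take e ts = take b ts @ seg b e"
proof -
  assume be: "b \<le> e" "e \<le> m"
  have "take e ts = map (nth ts) [0..<e]" using be by (intro nth_equalityI) auto
  also have "\<dots> = map (nth ts) [0..<b] @ seg b e"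
  proof -
    have "[0..<e] = [0..<b] @ [b..<e]" using upt_add_eq_append[of 0 b "e - b"] be by simp
    then show ?thesis by (simp add: seg_def)
  qed
  also have "map (nth ts) [0..<b] = take b ts" using be by (intro nth_equalityI) auto
  finally show ?thesis .
qed

lemma P_split: "b \<le> e \<Longrightarrow> e \<le> m \<Longrightarrow> P e = P b * prod_list (seg b e)"
  using take_split by (simp add: P_def)

lemma P_pos: "0 < P j"
  unfolding P_def using pos by (intro prod_list_pos) (auto dest: in_set_takeD)

lemma seg_pos: "\<forall>x\<in>set (seg b e). 0 < x \<or> e > m"
  using pos by (auto simp: seg_def)

lemma P_Suc: "j < m \<Longrightarrow> P (Suc j) = P j * ts ! j"
  by (simp add: P_def take_Suc_conv_app_nth)

lemma P_mono: "b \<le> e \<Longrightarrow> e \<le> m \<Longrightarrow> P b \<le> P e"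
proof -
  assume be: "b \<le> e" "e \<le> m"
  have "0 < prod_list (seg b e)" using pos be by (intro prod_list_pos) (auto simp: seg_def)
  then show ?thesis using P_split[OF be] by simp
qed

lemma img_ts: "j \<in> set img \<Longrightarrow> 1 < ts ! j"
proof -
  assume "j \<in> set img"
  then obtain i where i: "i < n" "j = a i" using set_img by auto
  then have "ts ! j = ss ! i" "ss ! i \<noteq> 1" "j < m" using ashape ne1 arange by auto
  moreover have "0 < ts ! j" using pos \<open>j < m\<close> by simp
  ultimately show ?thesis by simp
qed

lemma length_gapsAll: "length gapsAll = Suc (length img)"
  by (simp add: gapsAll_def)

lemma gapsAll_nth:
  "r < Suc (length img) \<Longrightarrow> gapsAll ! r =
     ((0 # map Suc img) ! r, (img @ [m]) ! r)"
  by (simp add: gapsAll_def)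

lemma gaps_le: "g \<in> set gapsAll \<Longrightarrow> fst g \<le> snd g \<and> snd g \<le> m"
proof -
  assume "g \<in> set gapsAll"
  then obtain r where r: "r < Suc (length img)" "g = gapsAll ! r"
    by (metis in_set_conv_nth length_gapsAll)
  have s: "\<And>i j. i < j \<Longrightarrow> j < length img \<Longrightarrow> img ! i < img ! j"
    using img_sorted by (simp add: sorted_wrt_iff_nth_less)
  have rng: "\<And>i. i < length img \<Longrightarrow> img ! i < m" using img_range by auto
  show ?thesis
  proof (cases r)
    case 0
    then show ?thesis using r rng[of 0] by (auto simp: gapsAll_nth nth_append)
  next
    case (Suc r')
    then show ?thesis using r s[of r' r] rng[of r'] rng[of r]
      by (auto simp: gapsAll_nth nth_append Suc_le_eq)
  qed
qed

lemma gaps_sorted: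
  "sorted_wrt (\<lambda>g g'. snd g \<in> set img \<and> Suc (snd g) \<le> fst g') gapsAll"
  unfolding sorted_wrt_iff_nth_less length_gapsAll
proof (intro allI impI)
  fix r r' assume rr: "r < r'" "r' < Suc (length img)"
  have s0: "\<forall>i j. i < j \<longrightarrow> j < length img \<longrightarrow> img ! i < img ! j"
    using img_sorted by (simp add: sorted_wrt_iff_nth_less)
  have s: "\<And>i j. i \<le> j \<Longrightarrow> j < length img \<Longrightarrow> img ! i \<le> img ! j"
  proof -
    fix i j assume "i \<le> j" "j < length img"
    then show "img ! i \<le> img ! j" using s0 by (cases "i = j") (auto intro: less_imp_le)
  qed
  obtain r'' where r'': "r' = Suc r''" using rr by (cases r') auto
  show "snd (gapsAll ! r) \<in> set img \<and> Suc (snd (gapsAll ! r)) \<le> fst (gapsAll ! r')"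
    using rr r'' s[of r r''] by (auto simp: gapsAll_nth nth_append)
qed

end

lemma list_cases3:
  obtains "ys = []" | y where "ys = [y]" | "length ys > 1"
proof (cases ys)
  case Nil then show ?thesis using that(1) by simp
next
  case (Cons y r) then show ?thesis using that(2,3) by (cases r) auto
qed

lemma concat_map_single: "concat (map (\<lambda>x. [f x]) xs) = map f xs"
  by (induction xs) auto

lemma lflat_lof: "lflat (layout_of_flat ys) = (if ys = [] then [(1,0)] else ys)"
proof -
  show ?thesis
  proof (cases rule: list_cases3[of ys])
    case 1 then show ?thesis by (simp add: layout_of_flat_def lflat_def)
  next
    case 2 then show ?thesis by (simp add: layout_of_flat_def lflat_def)
  next
    case 3
    then have "ys \<noteq> []" by auto
    then show ?thesis using 3
      by (simp add: layout_of_flat_def lflat_def o_def concat_map_single zip_map_fst_snd)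
  qed
qed

lemma lof_congruent: "congruent (fst (layout_of_flat ys)) (snd (layout_of_flat ys))"
  by (auto simp: layout_of_flat_def list_all2_conv_all_nth)

lemma lof_flat: "flat (fst (layout_of_flat ys)) = (if ys = [] then [1] else map fst ys)"
  using lflat_lof[of ys] map_fst_lflat[OF lof_congruent[of ys]] by (auto split: if_splits)

lemma lof_tsize: "tsize (fst (layout_of_flat ys)) = pm ys"
  by (simp add: tsize_def lof_flat)

lemma fold_max_zeros: "fold max (map (\<lambda>_. 0::nat) xs) 0 = 0"
  by (induction xs) auto

lemma lof_coalesced:
  assumes "ys \<noteq> []" "\<forall>p\<in>set ys. 0 < fst p" "flat_coalesced ys"
  shows "coalesced (layout_of_flat ys)"
proof -
  have ne1: "\<forall>p\<in>set ys. fst p \<noteq> 1"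
  proof
    fix p assume "p \<in> set ys"
    then obtain i where "i < length ys" "ys ! i = p" by (auto simp: in_set_conv_nth)
    then show "fst p \<noteq> 1" using assms(3) unfolding flat_coalesced_def by blast
  qed
  show ?thesis
  proof (cases rule: list_cases3[of ys])
    case 1 then show ?thesis using assms(1) by simp
  next
    case (2 y)
    then have "1 < fst y" using assms(2) ne1 by auto
    then show ?thesis using 2 by (simp add: coalesced_def layout_of_flat_def tsize_def)
  next
    case 3
    have "depth (Node (map (Leaf \<circ> fst) ys)) = 1"
      using fold_max_zeros[of ys] by (simp add: o_def)
    then show ?thesis using 3 assms(1,3) lflat_lof[of ys]
      by (simp add: coalesced_def layout_of_flat_def)
  qed
qed

lemma coal_lof: "coal L = layout_of_flat (coal_flat (lflat L))"
  by (simp add: coal_def)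

lemma coal_flat_one: "coal_flat [(1,0)] = []"
  by (simp add: coal_flat_def)

lemma coal_flat_eqI: "squeeze xs = squeeze ys \<Longrightarrow> coal_flat xs = coal_flat ys"
  by (simp add: coal_flat_def)

context setting begin

lemma lsort_Lg: "lsort (map (\<lambda>i. (ss!i, P (a i))) [0..<n]) = map (\<lambda>j. (ts!j, P j)) img"
  unfolding lsort_def
proof (rule sort_key_inj_key_eq)
  have "map (\<lambda>i. (ss!i, P (a i))) [0..<n] = map (\<lambda>j. (ts!j, P j)) (map a [0..<n])"
    using ashape by simp
  moreover have "mset (map a [0..<n]) = mset img"
  proof -
    have "distinct (map a [0..<n])" using ainj by (simp add: distinct_map atLeast0LessThan)
    moreover have "distinct img" by (simp add: img_def)
    moreover have "set (map a [0..<n]) = set img" using set_img by (auto simp: atLeast0LessThan)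
    ultimately show ?thesis using set_eq_iff_mset_eq_distinct by blast
  qed
  ultimately show "mset (map (\<lambda>i. (ss!i, P (a i))) [0..<n]) = mset (map (\<lambda>j. (ts!j, P j)) img)"
    by (simp only: mset_map)
  show "inj_on (\<lambda>(s, d). (d, s)) (set (map (\<lambda>i. (ss ! i, P (a i))) [0..<n]))"
    by (auto simp: inj_on_def)
  have "sorted_wrt (\<lambda>x y. (P x, ts!x) \<le> (P y, ts!y)) img"
  proof (rule sorted_wrt_mono_rel[OF _ img_sorted])
    fix x y assume xy: "x \<in> set img" "y \<in> set img" "x < y"
    have "y < m" using xy img_range by auto
    then have "P (Suc x) \<le> P y" using xy by (intro P_mono) auto
    moreover have "P (Suc x) = P x * ts ! x" using xy img_range by (intro P_Suc) auto
    moreover have "1 < ts ! x" using xy img_ts by auto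
    moreover have "0 < P x" by (rule P_pos)
    moreover have "P x < P x * ts ! x" using P_pos \<open>1 < ts ! x\<close> by (intro n_less_n_mult_m) auto
    ultimately have "P x < P y" by linarith
    then show "(P x, ts!x) \<le> (P y, ts!y)" by simp
  qed
  then show "sorted (map (\<lambda>(s, d). (d, s)) (map (\<lambda>j. (ts!j, P j)) img))"
    by (simp add: sorted_wrt_map o_def)
qed

end

context setting begin

lemma P0: "P 0 = 1" by (simp add: P_def)
lemma Pm: "P m = prod_list ts" by (simp add: P_def)

lemma C0_eq:
  "zip (map2 (div) (map snd (map (\<lambda>j. (ts!j, P j)) img) @ [prod_list ts])
          (1 # map (\<lambda>(s,d). s*d) (map (\<lambda>j. (ts!j, P j)) img)))
       (1 # map (\<lambda>(s,d). s*d) (map (\<lambda>j. (ts!j, P j)) img))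
   = map (\<lambda>(b,e). (prod_list (seg b e), P b)) gapsAll"
proof -
  have st: "1 # map (\<lambda>(s,d). s*d) (map (\<lambda>j. (ts!j, P j)) img) = map P (0 # map Suc img)"
    using img_range by (auto simp: P0 P_Suc mult.commute)
  have sh: "map snd (map (\<lambda>j. (ts!j, P j)) img) @ [prod_list ts] = map P (img @ [m])"
    by (simp add: Pm)
  show ?thesis
    unfolding st sh
  proof (rule nth_equalityI)
    show "length (zip (map2 (div) (map P (img @ [m])) (map P (0 # map Suc img))) (map P (0 # map Suc img))) =
      length (map (\<lambda>(b,e). (prod_list (seg b e), P b)) gapsAll)"
      by (simp add: gapsAll_def)
    fix r assume r: "r < length (zip (map2 (div) (map P (img @ [m])) (map P (0 # map Suc img))) (map P (0 # map Suc img)))"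
    then have r': "r < Suc (length img)" by simp
    have g: "gapsAll ! r \<in> set gapsAll" using r' length_gapsAll by simp
    define b where "b = (0 # map Suc img) ! r"
    define e where "e = (img @ [m]) ! r"
    have ge: "gapsAll ! r = (b, e)" using gapsAll_nth[OF r'] b_def e_def by simp
    have be: "b \<le> e" "e \<le> m" using gaps_le[OF g] ge by auto
    have "P e div P b = prod_list (seg b e)" using P_split[OF be] P_pos[of b] by simp
    moreover have "(map P img @ [P m]) ! r = P e"
      using r' unfolding e_def by (cases "r < length img") (auto simp: nth_append)
    moreover have "(P 0 # map (P \<circ> Suc) img) ! r = P b"
      using r' unfolding b_def by (cases r) auto
    ultimately show "zip (map2 (div) (map P (img @ [m])) (map P (0 # map Suc img))) (map P (0 # map Suc img)) ! r =
          map (\<lambda>(b,e). (prod_list (seg b e), P b)) gapsAll ! r"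
      using r' ge length_gapsAll by simp
  qed
qed

lemma seg_prod_pos: "b \<le> e \<Longrightarrow> e \<le> m \<Longrightarrow> 0 < prod_list (seg b e)"
  using pos by (intro prod_list_pos) (auto simp: seg_def)

lemma Q_sorted: "sorted_wrt (\<lambda>x y. snd y \<noteq> fst x * snd x) Q"
proof -
  have "sorted_wrt (\<lambda>g g'. snd g \<in> set img \<and> Suc (snd g) \<le> fst g') G"
    unfolding G_def by (rule sorted_wrt_filter[OF gaps_sorted])
  then have "sorted_wrt (\<lambda>g g'. P (fst g') \<noteq> prod_list (seg (fst g) (snd g)) * P (fst g)) G"
  proof (rule sorted_wrt_mono_rel[rotated])
    fix g g' assume gs: "g \<in> set G" "g' \<in> set G" and rel: "snd g \<in> set img \<and> Suc (snd g) \<le> fst g'"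
    have g1: "fst g \<le> snd g" "snd g \<le> m" using gs gaps_le by (auto simp: G_def)
    have g2: "fst g' \<le> snd g'" "snd g' \<le> m" using gs gaps_le by (auto simp: G_def)
    have e: "snd g < m" using rel img_range by auto
    have "prod_list (seg (fst g) (snd g)) * P (fst g) = P (snd g)" using P_split[OF g1] by simp
    moreover have "P (Suc (snd g)) \<le> P (fst g')" using rel g2 by (intro P_mono) auto
    moreover have "P (Suc (snd g)) = P (snd g) * ts ! snd g" using P_Suc[OF e] .
    moreover have "P (snd g) < P (snd g) * ts ! snd g"
      using P_pos img_ts rel by (intro n_less_n_mult_m) auto
    ultimately show "P (fst g') \<noteq> prod_list (seg (fst g) (snd g)) * P (fst g)" by linarith
  qed
  then show ?thesis unfolding Q_def sorted_wrt_map
    by (rule sorted_wrt_mono_rel[rotated]) auto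
qed

lemma Q_no1: "\<forall>q\<in>set Q. fst q \<noteq> 1"
  by (auto simp: Q_def G_def nontriv_def)

lemma Q_pos: "\<forall>q\<in>set Q. 0 < fst q"
  using gaps_le seg_prod_pos by (auto simp: Q_def G_def)

lemma coal_C0: "coal_flat (map (\<lambda>(b,e). (prod_list (seg b e), P b)) gapsAll) = Q"
proof -
  have "squeeze (map (\<lambda>(b,e). (prod_list (seg b e), P b)) gapsAll) = Q"
    unfolding squeeze_def Q_def G_def by (simp add: filter_map o_def nontriv_def[abs_def] case_prod_unfold)
  then show ?thesis
    unfolding coal_flat_def using nm_merge_id[OF nm_sorted[OF Q_sorted]] by simp
qed

lemma comp_eq:
  assumes "lflat Lg = map (\<lambda>i. (ss!i, P (a i))) [0..<n]"
  shows "lcomplement Lg (prod_list ts) = layout_of_flat Q"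
proof -
  have sq: "squeeze (map (\<lambda>i. (ss!i, P (a i))) [0..<n]) = map (\<lambda>i. (ss!i, P (a i))) [0..<n]"
    using ne1 by (intro squeeze_id) auto
  have cQ: "coal_flat Q = Q" using Q_no1 nm_sorted[OF Q_sorted] by (rule coal_flat_id)
  have "lcomplement Lg (prod_list ts) = coal (layout_of_flat Q)"
    unfolding lcomplement_def Let_def assms sq lsort_Lg C0_eq coal_C0 ..
  also have "\<dots> = layout_of_flat Q"
    unfolding coal_lof lflat_lof using cQ coal_flat_one by auto
  finally show ?thesis .
qed

end

lemma phi_blockwise:
  "list_all2 (\<lambda>u v. pm u = pm v \<and> (\<forall>y. phi_flat u y = phi_flat v y)) us vs \<Longrightarrow>
   phi_flat (concat us) x = phi_flat (concat vs) x \<and> pm (concat us) = pm (concat vs)"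
proof (induction arbitrary: x rule: list_all2_induct)
  case Nil then show ?case by simp
next
  case (Cons u us v vs)
  then show ?case by (simp add: phi_flat_append)
qed

lemma list_all2_mapI: "(\<forall>x\<in>set xs. R (f x) (g x)) \<Longrightarrow> list_all2 R (map f xs) (map g xs)"
  by (induction xs) auto

context setting begin

definition blkA :: "nat \<Rightarrow> nat \<Rightarrow> (nat \<times> nat) list" where
  "blkA b e = map (\<lambda>j. (ts!j, P j)) [b..<e]"
definition blkW :: "nat \<Rightarrow> nat \<Rightarrow> (nat \<times> nat) list" where
  "blkW b e = map (\<lambda>j. (ts!j, w j)) [b..<e]"
definition LgF :: "(nat \<times> nat) list" where
  "LgF = map (\<lambda>i. (ss!i, P (a i))) [0..<n]"
definition LfF :: "(nat \<times> nat) list" where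
  "LfF = map (\<lambda>i. (ss!i, w (a i))) [0..<n]"
definition pi1 :: "nat list" where
  "pi1 = map a [0..<n] @ concat (map (\<lambda>(b,e). [b..<e]) G)"
definition triv :: "nat list" where
  "triv = concat (map (\<lambda>(b,e). [b..<e]) (filter (\<lambda>g. \<not> nontriv g) gapsAll))"

lemma ring_aux: "(r::nat) * p + q * (p * t) = (r + t * q) * p"
  by (simp add: algebra_simps)

lemma contiguous:
  "b \<le> e \<Longrightarrow> e \<le> m \<Longrightarrow> y < prod_list (seg b e) \<Longrightarrow> phi_flat (blkA b e) y = y * P b"
proof (induction "e - b" arbitrary: b y)
  case 0
  then have "e = b" by simp
  then show ?case using 0 by (simp add: blkA_def seg_def)
next
  case (Suc d)
  then have be: "b < e" by simp
  have up: "[b..<e] = b # [Suc b..<e]" using be by (simp add: upt_conv_Cons)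
  have tb: "0 < ts ! b" using pos be Suc.prems by simp
  have "y < ts ! b * prod_list (seg (Suc b) e)" using Suc.prems(3) up by (simp add: seg_def)
  then have y': "y div ts ! b < prod_list (seg (Suc b) e)" using tb
    by (simp add: div_less_iff_less_mult mult.commute)
  have IH: "phi_flat (blkA (Suc b) e) (y div ts ! b) = (y div ts ! b) * P (Suc b)"
    using Suc.hyps(1)[of "Suc b" "y div ts ! b"] Suc.hyps(2) Suc.prems be y' by simp
  have "phi_flat (blkA b e) y = (y mod ts ! b) * P b + phi_flat (blkA (Suc b) e) (y div ts ! b)"
    using up by (simp add: blkA_def phi_flat_Cons)
  also have "\<dots> = (y mod ts ! b) * P b + (y div ts ! b) * (P b * ts ! b)"
    using IH P_Suc[of b] be Suc.prems by simp
  also have "\<dots> = (y mod ts ! b + ts ! b * (y div ts ! b)) * P b" by (rule ring_aux)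
  also have "\<dots> = y * P b" by (simp only: mod_mult_div_eq)
  finally show ?case .
qed

lemma blkA_fst: "map fst (blkA b e) = seg b e" by (simp add: blkA_def seg_def)
lemma blkW_fst: "map fst (blkW b e) = seg b e" by (simp add: blkW_def seg_def)

lemma G_sub: "g \<in> set G \<Longrightarrow> g \<in> set gapsAll \<and> nontriv g" by (simp add: G_def)

lemma blkA_pos: "e \<le> m \<Longrightarrow> \<forall>p\<in>set (blkA b e). 0 < fst p"
  using pos by (auto simp: blkA_def)

lemma blkA_equiv:
  assumes "g \<in> set G"
  shows "pm [(prod_list (seg (fst g) (snd g)), P (fst g))] = pm (blkA (fst g) (snd g)) \<and>
     (\<forall>y. phi_flat [(prod_list (seg (fst g) (snd g)), P (fst g))] y = phi_flat (blkA (fst g) (snd g)) y)"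
proof -
  obtain b e where g: "g = (b, e)" by force
  have be: "b \<le> e" "e \<le> m" using gaps_le G_sub assms g by fastforce+
  have c: "0 < prod_list (seg b e)" using seg_prod_pos[OF be] .
  have pmE: "pm (blkA b e) = prod_list (seg b e)" using blkA_fst by simp
  have "\<forall>y. phi_flat [(prod_list (seg b e), P b)] y = phi_flat (blkA b e) y"
  proof
    fix y
    have "phi_flat (blkA b e) y = phi_flat (blkA b e) (y mod prod_list (seg b e))"
      using phi_flat_mod[OF blkA_pos[OF be(2)], of b y] pmE by simp
    also have "\<dots> = (y mod prod_list (seg b e)) * P b" using contiguous[OF be] c by simp
    finally show "phi_flat [(prod_list (seg b e), P b)] y = phi_flat (blkA b e) y"
      by (simp add: phi_flat_Cons)
  qed
  then show ?thesis using g pmE by simp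
qed

lemma triv_ones: "j \<in> set triv \<Longrightarrow> ts ! j = 1"
proof -
  assume "j \<in> set triv"
  then obtain b e where g: "(b, e) \<in> set gapsAll" "\<not> nontriv (b, e)" "j \<in> set [b..<e]"
    by (auto simp: triv_def)
  then have "prod_list (seg b e) = 1" by (simp add: nontriv_def)
  moreover have "ts ! j \<in> set (seg b e)" using g by (auto simp: seg_def)
  ultimately show "ts ! j = 1" by (rule prod_list_eq1)
qed

lemma perm_pi: "mset (pi1 @ triv) = mset [0..<m]"
proof -
  have "mset (concat (map (\<lambda>(b,e). [b..<e]) G)) + mset triv = mset js"
    unfolding G_def triv_def gaps_concat_js[symmetric] by (rule mset_concat_filter)
  moreover have "mset (map a [0..<n]) = mset img"
  proof -
    have "distinct (map a [0..<n])" using ainj by (simp add: distinct_map atLeast0LessThan)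
    moreover have "distinct img" by (simp add: img_def)
    moreover have "set (map a [0..<n]) = set img" using set_img by (auto simp: atLeast0LessThan)
    ultimately show ?thesis using set_eq_iff_mset_eq_distinct by blast
  qed
  moreover have "mset img + mset js = mset [0..<m]"
    unfolding img_def js_def by (metis mset_filter multiset_partition)
  ultimately show ?thesis by (simp add: pi1_def add.assoc)
qed

lemma pi_props: "distinct (pi1 @ triv) \<and> set (pi1 @ triv) = {..<m}"
proof -
  have "distinct (pi1 @ triv)" using perm_pi by (metis distinct_upt mset_eq_imp_distinct_iff)
  moreover have "set (pi1 @ triv) = set [0..<m]" using perm_pi by (metis mset_eq_setD)
  ultimately show ?thesis by (simp add: atLeast0LessThan)
qed

lemma phi_triv:
  "phi_flat (map (\<lambda>j. (ts!j, v j)) (pi1 @ triv)) x = phi_flat (map (\<lambda>j. (ts!j, v j)) pi1) x"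
proof -
  have "phi_flat (map (\<lambda>j. (ts!j, v j)) triv) y = 0" for y
    using triv_ones by (intro phi_flat_ones) auto
  then show ?thesis by (simp add: phi_flat_append)
qed

lemma A_flat_phi:
  "phi_flat (LgF @ (if G = [] then [(1,0)] else Q)) x = phi_flat (map (\<lambda>j. (ts!j, P j)) (pi1 @ triv)) x"
proof -
  let ?us = "LgF # (if G = [] then [[(1,0)]] else map (\<lambda>g. [(prod_list (seg (fst g) (snd g)), P (fst g))]) G)"
  let ?vs = "LgF # (if G = [] then [[]] else map (\<lambda>g. blkA (fst g) (snd g)) G)"
  have cu: "concat ?us = LgF @ (if G = [] then [(1,0)] else Q)"
    by (simp add: Q_def concat_map_single case_prod_unfold)
  have cv: "concat ?vs = map (\<lambda>j. (ts!j, P j)) pi1"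
    using ashape by (simp add: LgF_def pi1_def blkA_def map_concat case_prod_unfold o_def)
  have "list_all2 (\<lambda>u v. pm u = pm v \<and> (\<forall>y. phi_flat u y = phi_flat v y)) ?us ?vs"
  proof (cases "G = []")
    case True then show ?thesis by (simp add: phi_flat_Cons)
  next
    case False
    have "list_all2 (\<lambda>u v. pm u = pm v \<and> (\<forall>y. phi_flat u y = phi_flat v y))
      (map (\<lambda>g. [(prod_list (seg (fst g) (snd g)), P (fst g))]) G) (map (\<lambda>g. blkA (fst g) (snd g)) G)"
      using blkA_equiv by (intro list_all2_mapI) blast
    then show ?thesis using False by simp
  qed
  then have "phi_flat (concat ?us) x = phi_flat (concat ?vs) x" using phi_blockwise by blast
  then show ?thesis using cu cv phi_triv by simp
qed

definition Rs :: "layout list" where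
  "Rs = map (\<lambda>g. layout_of_flat (coal_flat (blkW (fst g) (snd g)))) G"

lemma C_flat_phi:
  "phi_flat (LfF @ (if G = [] then [(1,0)] else concat (map lflat Rs))) x =
   phi_flat (map (\<lambda>j. (ts!j, w j)) (pi1 @ triv)) x"
proof -
  have ne: "g \<in> set G \<Longrightarrow> coal_flat (blkW (fst g) (snd g)) \<noteq> []" for g
    using G_sub[of g] by (intro coal_flat_nonempty) (simp add: blkW_fst nontriv_def)
  have lR: "map lflat Rs = map (\<lambda>g. coal_flat (blkW (fst g) (snd g))) G"
    using ne by (simp add: Rs_def lflat_lof)
  let ?us = "LfF # (if G = [] then [[(1,0)]] else map (\<lambda>g. coal_flat (blkW (fst g) (snd g))) G)"
  let ?vs = "LfF # (if G = [] then [[]] else map (\<lambda>g. blkW (fst g) (snd g)) G)"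
  have cu: "concat ?us = LfF @ (if G = [] then [(1,0)] else concat (map lflat Rs))"
    using lR by simp
  have cv: "concat ?vs = map (\<lambda>j. (ts!j, w j)) pi1"
    using ashape by (simp add: LfF_def pi1_def blkW_def map_concat case_prod_unfold o_def)
  have "list_all2 (\<lambda>u v. pm u = pm v \<and> (\<forall>y. phi_flat u y = phi_flat v y)) ?us ?vs"
  proof (cases "G = []")
    case True then show ?thesis by (simp add: phi_flat_Cons)
  next
    case False
    have "list_all2 (\<lambda>u v. pm u = pm v \<and> (\<forall>y. phi_flat u y = phi_flat v y))
      (map (\<lambda>g. coal_flat (blkW (fst g) (snd g))) G) (map (\<lambda>g. blkW (fst g) (snd g)) G)"
      by (intro list_all2_mapI) (simp add: phi_flat_coal pm_coal)
    then show ?thesis using False by simp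
  qed
  then have "phi_flat (concat ?us) x = phi_flat (concat ?vs) x" using phi_blockwise by blast
  then show ?thesis using cu cv phi_triv by simp
qed

end

definition graftR :: "layout list \<Rightarrow> layout" where
  "graftR Rs = (if length Rs > 1 then (Node (map fst Rs), Node (map snd Rs))
     else if length Rs = 1 then hd Rs else (Leaf 1, Leaf 0))"

lemma graftR_lflat:
  assumes "\<forall>R\<in>set Rs. congruent (fst R) (snd R)"
  shows "lflat (graftR Rs) = (if Rs = [] then [(1,0)] else concat (map lflat Rs))"
proof (cases rule: list_cases3[of Rs])
  case 1 then show ?thesis by (simp add: graftR_def lflat_def)
next
  case (2 R) then show ?thesis by (simp add: graftR_def)
next
  case 3
  have "list_all2 (\<lambda>a b. length a = length b) (map (flat \<circ> fst) Rs) (map (flat \<circ> snd) Rs)"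
    using assms congruent_len by (auto simp: list_all2_conv_all_nth)
  then have "zip (concat (map (flat \<circ> fst) Rs)) (concat (map (flat \<circ> snd) Rs)) =
    concat (map (\<lambda>(a,b). zip a b) (zip (map (flat \<circ> fst) Rs) (map (flat \<circ> snd) Rs)))"
    by (rule zip_concat)
  also have "\<dots> = concat (map lflat Rs)"
    by (simp add: zip_map_map lflat_def[abs_def] case_prod_unfold o_def zip_same_conv_map)
  moreover have "Rs \<noteq> []" using 3 by (cases Rs) auto
  ultimately show ?thesis using 3 by (simp add: graftR_def lflat_def o_def)
qed

lemma graftR_props:
  assumes "list_all2 (\<lambda>R q. tsize (fst R) = fst q \<and> coalesced R \<and> congruent (fst R) (snd R)) Rs Q"
  shows "refines (fst (graftR Rs)) (fst (layout_of_flat Q)) \<and>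
    coalesced_over (fst (graftR Rs)) (snd (graftR Rs)) (fst (layout_of_flat Q)) \<and>
    congruent (fst (graftR Rs)) (snd (graftR Rs)) \<and>
    lflat (graftR Rs) = (if Rs = [] then [(1,0)] else concat (map lflat Rs))"
proof -
  have len: "length Rs = length Q" using assms by (rule list_all2_lengthD)
  have nth: "\<And>i. i < length Rs \<Longrightarrow> tsize (fst (Rs!i)) = fst (Q!i) \<and> coalesced (Rs!i) \<and> congruent (fst (Rs!i)) (snd (Rs!i))"
    using assms by (auto simp: list_all2_conv_all_nth)
  show ?thesis
  proof (cases rule: list_cases3[of Rs])
    case 1
    then have "Q = []" using len by simp
    then show ?thesis using 1 by (simp add: graftR_def layout_of_flat_def coalesced_def tsize_def lflat_def)
  next
    case (2 R)
    then obtain q where q: "Q = [q]" using len by (cases Q) auto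
    have R: "tsize (fst R) = fst q" "coalesced R" "congruent (fst R) (snd R)" using nth[of 0] 2 q by auto
    then show ?thesis using 2 q by (simp add: graftR_def layout_of_flat_def)
  next
    case 3
    have ref: "list_all2 refines (map fst Rs) (map (Leaf \<circ> fst) Q)"
      using nth len by (auto simp: list_all2_conv_all_nth)
    have cg: "list_all2 congruent (map fst Rs) (map snd Rs)"
      using nth by (auto simp: list_all2_conv_all_nth)
    have co: "coalesced_over (Node (map fst Rs)) (Node (map snd Rs)) (Node (map (Leaf \<circ> fst) Q))"
      using nth len by auto
    have "lflat (graftR Rs) = (if Rs = [] then [(1,0)] else concat (map lflat Rs))"
    proof (rule graftR_lflat, intro ballI)
      fix R assume "R \<in> set Rs"
      then obtain i where "i < length Rs" "R = Rs ! i" by (auto simp: in_set_conv_nth)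
      then show "congruent (fst R) (snd R)" using nth by simp
    qed
    then show ?thesis using 3 len ref cg co by (simp add: graftR_def layout_of_flat_def)
  qed
qed

lemma coal_flat_concat_app:
  "coal_flat (X @ concat (map coal_flat Ys)) = coal_flat (X @ concat Ys)"
proof -
  have "coal_flat (X @ concat (map coal_flat Ys)) = coal_flat (concat (X # map coal_flat Ys))" by simp
  also have "\<dots> = coal_flat (concat (map coal_flat (X # map coal_flat Ys)))" by (rule coal_flat_concat)
  also have "\<dots> = coal_flat (concat (map coal_flat (X # Ys)))" by (simp add: coal_flat_idem o_def)
  also have "\<dots> = coal_flat (concat (X # Ys))" by (rule coal_flat_concat[symmetric])
  finally show ?thesis by simp
qed

lemma concat_map_filter_nil:
  "(\<forall>x\<in>set xs. \<not> P x \<longrightarrow> f x = []) \<Longrightarrow> concat (map f (filter P xs)) = concat (map f xs)"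
  by (induction xs) auto

context setting begin

lemma final_flat:
  "coal_flat (LfF @ lflat (graftR Rs)) = coal_flat (LfF @ map (\<lambda>j. (ts!j, w j)) js)"
proof -
  have ne: "g \<in> set G \<Longrightarrow> coal_flat (blkW (fst g) (snd g)) \<noteq> []" for g
    using G_sub[of g] by (intro coal_flat_nonempty) (simp add: blkW_fst nontriv_def)
  have lR: "map lflat Rs = map (\<lambda>g. coal_flat (blkW (fst g) (snd g))) G"
    using ne by (simp add: Rs_def lflat_lof)
  have sqjs: "squeeze (map (\<lambda>j. (ts!j, w j)) js) = squeeze (concat (map (\<lambda>g. blkW (fst g) (snd g)) G))"
  proof -
    have "map (\<lambda>j. (ts!j, w j)) js = concat (map (\<lambda>g. blkW (fst g) (snd g)) gapsAll)"
      unfolding gaps_concat_js[symmetric] by (simp add: map_concat blkW_def case_prod_unfold o_def)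
    then have "squeeze (map (\<lambda>j. (ts!j, w j)) js) = concat (map (\<lambda>g. squeeze (blkW (fst g) (snd g))) gapsAll)"
      by (simp add: squeeze_concat o_def)
    also have "\<dots> = concat (map (\<lambda>g. squeeze (blkW (fst g) (snd g))) G)"
      unfolding G_def
    proof (rule concat_map_filter_nil[symmetric], intro ballI impI)
      fix g assume g: "g \<in> set gapsAll" "\<not> nontriv g"
      then have "prod_list (seg (fst g) (snd g)) = 1" by (simp add: nontriv_def)
      then have "\<forall>p\<in>set (blkW (fst g) (snd g)). fst p = 1"
        using prod_list_eq1 blkW_fst by (metis image_eqI list.set_map)
      then show "squeeze (blkW (fst g) (snd g)) = []" by (simp add: squeeze_def case_prod_unfold)
    qed
    also have "\<dots> = squeeze (concat (map (\<lambda>g. blkW (fst g) (snd g)) G))"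
      by (simp add: squeeze_concat o_def)
    finally show ?thesis .
  qed
  show ?thesis
  proof (cases "Rs = []")
    case True
    then have "G = []" by (simp add: Rs_def)
    then have "squeeze (map (\<lambda>j. (ts!j, w j)) js) = []" using sqjs by simp
    then show ?thesis using True by (intro coal_flat_eqI) (simp add: graftR_def lflat_def)
  next
    case False
    have "lflat (graftR Rs) = concat (map lflat Rs)"
      using False graftR_lflat[of Rs] lof_congruent by (auto simp: Rs_def)
    also have "\<dots> = concat (map coal_flat (map (\<lambda>g. blkW (fst g) (snd g)) G))"
      by (simp only: lR map_map o_def)
    finally have "lflat (graftR Rs) = concat (map coal_flat (map (\<lambda>g. blkW (fst g) (snd g)) G))" .
    then have "coal_flat (LfF @ lflat (graftR Rs)) = coal_flat (LfF @ concat (map (\<lambda>g. blkW (fst g) (snd g)) G))"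
      using coal_flat_concat_app[of LfF "map (\<lambda>g. blkW (fst g) (snd g)) G"] by simp
    also have "\<dots> = coal_flat (LfF @ map (\<lambda>j. (ts!j, w j)) js)"
      using sqjs by (intro coal_flat_eqI) simp
    finally show ?thesis .
  qed
qed

end

lemma lflat_lconcat:
  "congruent (fst L1) (snd L1) \<Longrightarrow> congruent (fst L2) (snd L2) \<Longrightarrow> lflat (lconcat L1 L2) = lflat L1 @ lflat L2"
  by (simp add: lconcat_def lflat_def congruent_len)

lemma zip_upt: "zip xs (map f [0..<length xs]) = map (\<lambda>i. (xs!i, f i)) [0..<length xs]"
  by (intro nth_equalityI) auto

context setting begin

lemma main_setting:
  assumes cg: "congruent S Dg" "congruent S Df"
    and fS: "flat S = ss" and fDg: "flat Dg = map (\<lambda>i. P (a i)) [0..<n]"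
    and fDf: "flat Df = map (\<lambda>i. w (a i)) [0..<n]"
    and Lf: "lflat Lf = map (\<lambda>j. (ts!j, w j)) [0..<m]" "lsize Lf = prod_list ts"
  shows "coal (ldivide Lf (S, Dg)) = layout_of_flat (coal_flat (LfF @ map (\<lambda>j. (ts!j, w j)) js))"
proof -
  define Lg where "Lg = (S, Dg)"
  have lLg: "lflat Lg = LgF" using fS fDg by (simp add: Lg_def lflat_def LgF_def zip_upt)
  have comp: "lcomplement Lg (lsize Lf) = layout_of_flat Q" using comp_eq[OF lLg[unfolded LgF_def]] Lf(2) by simp
  define A where "A = lconcat Lg (layout_of_flat Q)"
  define Cc where "Cc = graftR Rs"
  define C where "C = (Node [S, fst Cc], Node [Df, snd Cc])"
  have GQ: "(G = []) = (Q = [])" by (simp add: Q_def)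
  have GR: "(G = []) = (Rs = [])" by (simp add: Rs_def)
  have Rprops: "list_all2 (\<lambda>R q. tsize (fst R) = fst q \<and> coalesced R \<and> congruent (fst R) (snd R)) Rs Q"
    unfolding Rs_def Q_def
  proof (rule list_all2_mapI, intro ballI)
    fix g assume g: "g \<in> set G"
    obtain b e where ge: "g = (b, e)" by force
    have be: "b \<le> e" "e \<le> m" using gaps_le G_sub g ge by fastforce+
    have ne: "coal_flat (blkW b e) \<noteq> []"
      using G_sub[of g] g ge by (intro coal_flat_nonempty) (simp add: blkW_fst nontriv_def)
    have ps: "\<forall>p\<in>set (blkW b e). 0 < fst p" using pos be by (auto simp: blkW_def)
    have "coalesced (layout_of_flat (coal_flat (blkW b e)))"
      using ne coal_flat_pos[OF ps] flat_coalesced_coal by (intro lof_coalesced) auto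
    moreover have "tsize (fst (layout_of_flat (coal_flat (blkW b e)))) = prod_list (seg b e)"
      by (simp add: lof_tsize pm_coal blkW_fst)
    ultimately show "tsize (fst (layout_of_flat (coal_flat (blkW (fst g) (snd g))))) = fst (case g of (b, e) \<Rightarrow> (prod_list (seg b e), P b)) \<and>
         coalesced (layout_of_flat (coal_flat (blkW (fst g) (snd g)))) \<and>
         congruent (fst (layout_of_flat (coal_flat (blkW (fst g) (snd g))))) (snd (layout_of_flat (coal_flat (blkW (fst g) (snd g)))))"
      using ge lof_congruent by simp
  qed
  note gp = graftR_props[OF Rprops, folded Cc_def]
  have lCc: "lflat Cc = (if G = [] then [(1,0)] else concat (map lflat Rs))" using gp GR by simp
  have lC: "lflat C = LfF @ lflat Cc"
  proof -
    have "lflat C = lflat (lconcat (S, Df) Cc)" by (simp add: C_def lconcat_def)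
    also have "\<dots> = lflat (S, Df) @ lflat Cc" using cg gp by (intro lflat_lconcat) auto
    also have "lflat (S, Df) = LfF" using fS fDf by (simp add: lflat_def LfF_def zip_upt)
    finally show ?thesis .
  qed
  have lA: "lflat A = LgF @ (if G = [] then [(1,0)] else Q)"
  proof -
    have "lflat A = lflat Lg @ lflat (layout_of_flat Q)"
      unfolding A_def using cg lof_congruent by (intro lflat_lconcat) (auto simp: Lg_def)
    then show ?thesis using lLg GQ by (simp add: lflat_lof)
  qed
  have ssgt: "\<forall>x\<in>set ss. 1 < x"
  proof
    fix x assume "x \<in> set ss"
    then obtain i where i: "i < n" "x = ss ! i" by (auto simp: in_set_conv_nth)
    then have "x = ts ! a i" "a i < m" "x \<noteq> 1" using ashape arange ne1 by auto
    then show "1 < x" using pos by (metis less_one nat_neq_iff nth_mem not_less_zero)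
  qed
  have valid: "valid_layout C"
  proof -
    have c: "congruent (fst C) (snd C)" using cg gp by (simp add: C_def)
    have "\<forall>p\<in>set (lflat C). 0 < fst p"
    proof
      fix p assume p: "p \<in> set (lflat C)"
      show "0 < fst p"
      proof (cases "p \<in> set LfF")
        case True
        then obtain i where i: "i < n" "p = (ss!i, w (a i))" by (auto simp: LfF_def)
        have "1 < ss ! i" using bspec[OF ssgt nth_mem[OF i(1)]] .
        then show ?thesis using i by simp
      next
        case False
        then have "p \<in> set (lflat Cc)" using p lC by simp
        then consider "p = (1,0)" | g where "g \<in> set G" "p \<in> set (coal_flat (blkW (fst g) (snd g)))"
          using lCc by (auto simp: Rs_def lflat_lof split: if_splits)
        then show ?thesis
        proof cases
          case 1 then show ?thesis by simp
        next
          case (2 g)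
          have "snd g \<le> m" using gaps_le G_sub 2(1) by blast
          then have "\<forall>p\<in>set (blkW (fst g) (snd g)). 0 < fst p" using pos by (auto simp: blkW_def)
          then show ?thesis using coal_flat_pos 2(2) by blast
        qed
      qed
    qed
    then show ?thesis using valid_block[OF c] by blast
  qed
  have refC: "refines (fst C) (fst A)"
    using gp refines_refl[of S] by (simp add: C_def A_def lconcat_def Lg_def)
  have coC: "coalesced_over (fst C) (snd C) (fst A)"
  proof -
    have "coalesced_over S Df S" using cg(2) ssgt fS by (intro coalesced_over_refl) auto
    then show ?thesis using gp by (simp add: C_def A_def lconcat_def Lg_def less_Suc_eq)
  qed
  have pp: "distinct (pi1 @ triv)" "set (pi1 @ triv) = {..<length ts}" using pi_props by auto
  note PP = perm_phi[OF pos pp, of _ w]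
  have phA: "phi A x = phi_flat (map (\<lambda>j. (ts!j, P j)) (pi1 @ triv)) x" for x
    using A_flat_phi lA by (simp add: phi_def P_def)
  have phC: "phi C x = phi_flat (map (\<lambda>j. (ts!j, w j)) (pi1 @ triv)) x" for x
    using C_flat_phi lC lCc by (simp add: phi_def)
  have bound: "\<forall>x < lsize A. phi A x < lsize Lf"
    using phA PP Lf(2) by (simp add: P_def)
  have eq: "\<forall>x < lsize A. phi C x = phi Lf (phi A x)"
    using phA phC PP Lf(1) by (simp add: P_def phi_def)
  have "lcompose Lf A = C" by (rule lcompose_eqI[OF valid refC coC bound eq])
  then have "ldivide Lf (S, Dg) = C" by (simp add: ldivide_def A_def comp[unfolded Lg_def] Lg_def)
  then show ?thesis using lC lCc final_flat[of] by (simp add: coal_lof Cc_def)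
qed

end

theorem mainTheorem5:
  fixes S T U :: ntuple and \<alpha> \<beta> :: "nat \<Rightarrow> nat option"
  defines "g \<equiv> (S, T, \<alpha>)" and "f \<equiv> (T, U, \<beta>)"
  assumes "is_morph g" and "is_morph f"
    and "non_degenerate g" and "non_degenerate f"
    and "complementable g"
  shows "coal (mlayout (mdivide f g)) = coal (ldivide (mlayout f) (mlayout g))"
proof -
  define ss where "ss = flat S"
  define ts where "ts = flat T"
  define a where "a i = the (\<alpha> i)" for i
  define w where "w j = (case \<beta> j of None \<Rightarrow> 0 | Some k \<Rightarrow> prod_list (take k (flat U)))" for j
  have mg: "positive_nt S" "positive_nt T" "\<forall>i. length ss \<le> i \<longrightarrow> \<alpha> i = None"
    "\<forall>i j. i < length ss \<and> \<alpha> i = Some j \<longrightarrow> j < length ts \<and> ss ! i = ts ! j"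
    "\<forall>i i' j. i < length ss \<and> i' < length ss \<and> \<alpha> i = Some j \<and> \<alpha> i' = Some j \<longrightarrow> i = i'"
    using assms(3) by (auto simp: is_morph_def g_def len_def ss_def ts_def)
  have cpl: "\<forall>i<length ss. \<alpha> i = Some (a i)"
    using assms(7) by (auto simp: complementable_def g_def mdom_def mmap_def len_def ss_def a_def)
  have nd: "\<forall>i<length ss. ss ! i = 1 \<longrightarrow> \<alpha> i = None"
    using assms(5) by (auto simp: non_degenerate_def g_def mdom_def mmap_def len_def ss_def)
  interpret st: setting ss ts a w
  proof
    show "\<forall>x\<in>set ts. 0 < x" using mg(2) by (simp add: positive_nt_def ts_def)
    show "inj_on a {..<length ss}"
    proof (rule inj_onI)
      fix i i' assume "i \<in> {..<length ss}" "i' \<in> {..<length ss}" "a i = a i'"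
      then show "i = i'" using mg(5) cpl by (metis lessThan_iff)
    qed
    show "\<forall>i<length ss. a i < length ts" using mg(4) cpl by blast
    show "\<forall>i<length ss. ss ! i = ts ! a i" using mg(4) cpl by blast
    show "\<forall>i<length ss. ss ! i \<noteq> 1" using nd cpl by auto
  qed
  have Lg: "mlayout g = (S, fill S (map (\<lambda>i. st.P (a i)) [0..<length ss]))"
  proof -
    have e: "map (\<lambda>i. case \<alpha> i of None \<Rightarrow> 0 | Some j \<Rightarrow> prod_list (take j ts)) [0..<length ss]
        = map (\<lambda>i. st.P (a i)) [0..<length ss]"
      using cpl by (auto simp: st.P_def)
    have "mlayout g = (S, fill S (map (\<lambda>i. case \<alpha> i of None \<Rightarrow> 0 | Some j \<Rightarrow> prod_list (take j ts)) [0..<length ss]))"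
      unfolding mlayout_def g_def mdom_def mmap_def mcod_def len_def ss_def ts_def fst_conv snd_conv by simp
    then show ?thesis by (simp only: e)
  qed
  have Lf: "mlayout f = (T, fill T (map w [0..<length ts]))"
    unfolding mlayout_def f_def mdom_def mmap_def mcod_def len_def ts_def w_def fst_conv snd_conv by simp
  have lLf: "lflat (mlayout f) = map (\<lambda>j. (ts!j, w j)) [0..<length ts]"
    using Lf by (simp add: lflat_def flat_fill ts_def zip_upt)
  have sLf: "lsize (mlayout f) = prod_list ts" using Lf by (simp add: lsize_def tsize_def ts_def)
  have RHS: "coal (ldivide (mlayout f) (mlayout g)) =
      layout_of_flat (coal_flat (st.LfF @ map (\<lambda>j. (ts!j, w j)) st.js))"
    unfolding Lg
    by (rule st.main_setting[OF congruent_fill congruent_fill[of S "map (\<lambda>i. w (a i)) [0..<length ss]"] _ _ _ lLf sLf])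
       (auto simp: flat_fill ss_def)
  have js: "missing_idx g = st.js"
  proof -
    have "the ` (\<alpha> ` {..<length ss} - {None}) = a ` {..<length ss}"
    proof -
      have "\<alpha> ` {..<length ss} = Some ` a ` {..<length ss}" using cpl by (auto simp: image_iff)
      then show ?thesis by (auto simp: image_iff)
    qed
    then have "missing_idx g = filter (\<lambda>j. j \<notin> a ` {..<length ss}) [0..<length ts]"
      unfolding missing_idx_def g_def mdom_def mmap_def mcod_def len_def ss_def ts_def fst_conv snd_conv by simp
    then show ?thesis by (simp add: st.js_def)
  qed
  have js': "missing_idx (S, T, \<alpha>) = st.js" using js by (simp add: g_def)
  define Tc where "Tc = Node (map (\<lambda>j. Leaf (ts ! j)) st.js)"
  define X where "X = Node [S, Tc]"
  define h where "h i = (case (if i < length ss then \<alpha> i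
      else if i - length ss < length st.js then Some (st.js ! (i - length ss)) else None) of
      None \<Rightarrow> 0 | Some j \<Rightarrow> w j)" for i
  have fX: "flat X = ss @ map (nth ts) st.js" by (simp add: X_def Tc_def ss_def o_def)
  have lay: "mlayout (mdivide f g) = (X, fill X (map h [0..<length ss + length st.js]))"
  proof -
    have "mlayout (mdivide f g) = (X, fill X (map (\<lambda>i. case (case (if i < length ss then \<alpha> i
      else if i - length ss < length st.js then Some (st.js ! (i - length ss)) else None) of None \<Rightarrow> None | Some j \<Rightarrow> \<beta> j) of
      None \<Rightarrow> 0 | Some k \<Rightarrow> prod_list (take k (flat U))) [0..<length (flat X)]))"
      unfolding mlayout_def mdivide_def mcompose_def mconcat_def mcomplement_def Let_def
      unfolding g_def f_def mdom_def mmap_def mcod_def len_def fst_conv snd_conv js'[unfolded ss_def ts_def]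
      unfolding ss_def[symmetric] ts_def[symmetric]
      by (simp add: X_def Tc_def o_def)
    also have "map (\<lambda>i. case (case (if i < length ss then \<alpha> i
      else if i - length ss < length st.js then Some (st.js ! (i - length ss)) else None) of None \<Rightarrow> None | Some j \<Rightarrow> \<beta> j) of
      None \<Rightarrow> 0 | Some k \<Rightarrow> prod_list (take k (flat U))) [0..<length (flat X)] = map h [0..<length ss + length st.js]"
      using fX by (intro map_cong) (auto simp: h_def w_def split: option.splits)
    finally show ?thesis .
  qed
  have hs: "map h [0..<length ss + length st.js] = map (\<lambda>i. w (a i)) [0..<length ss] @ map w st.js"
    by (rule nth_equalityI) (auto simp: nth_append h_def cpl)
  have "lflat (mlayout (mdivide f g)) = st.LfF @ map (\<lambda>j. (ts!j, w j)) st.js"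
  proof -
    have "lflat (mlayout (mdivide f g)) = zip (ss @ map (nth ts) st.js) (map (\<lambda>i. w (a i)) [0..<length ss] @ map w st.js)"
      unfolding lay hs lflat_def using fX by (simp add: flat_fill)
    also have "\<dots> = zip ss (map (\<lambda>i. w (a i)) [0..<length ss]) @ zip (map (nth ts) st.js) (map w st.js)"
      by simp
    also have "\<dots> = st.LfF @ map (\<lambda>j. (ts!j, w j)) st.js"
      by (simp add: st.LfF_def zip_upt zip_map_map zip_same_conv_map o_def)
    finally show ?thesis .
  qed
  then show ?thesis using RHS by (simp add: coal_lof)
qed

end
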